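(* $M_{2^\infty}(\mathbb{C})$ is a maximal $C^*$-subalgebra of $M_{2^\infty}(C(\mathbb{T}))$; concretely, $\mathcal{F}_2$ is a maximal $C^*$-subalgebra of $\mathcal{B}_2$, i.e. every $C^*$-subalgebra $C$ with $\mathcal{F}_2\subseteq C\subseteq\mathcal{B}_2$ equals $\mathcal{F}_2$ or $\mathcal{B}_2$.
   Context: $\mathcal{Q}_2$ is the universal unital $C^*$-algebra generated by a unitary $u$ and an isometry $s_2$ subject to $s_2u=u^2s_2$ and $s_2s_2^*+us_2s_2^*u^{*}=1$; write $s_{2^n}:=s_2^n$. Let $\mathcal{B}_2:=\overline{\operatorname{span}}\{u^ms_{2^n}s_{2^n}^*u^k: m,k\in\mathbb{Z},\,n\ge0\}$ (the fixed-point algebra of the gauge action $u\mapsto u$, $s_2\mapsto ts_2$, $t\in\mathbb{T}$) and $\mathcal{F}_2:=\overline{\operatorname{span}}\{u^ms_{2^n}s_{2^n}^*u^{-k}:0\le m,k\le 2^n-1,\,n\ge0\}\subseteq\mathcal{B}_2$. In the paper, $M_{2^\infty}(C(\mathbb{T}))$ denotes the Bunce–Deddens algebra of type $2^\infty$ and $M_{2^\infty}(\mathbb{C})$ the UHF (CAR) algebra of type $2^\infty$ sitting inside it, via the identification of $\mathcal{B}_2$ with $M_{2^\infty}(C(\mathbb{T}))$ under which $\mathcal{F}_2$ corresponds to $M_{2^\infty}(\mathbb{C})$. Maximal means proper with no $C^*$-subalgebra strictly in between. *)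

theory Defs
  imports "HOL-Analysis.Analysis"
begin

class cstar_algebra = real_normed_algebra_1 + banach +
  fixes scaleC :: "complex \<Rightarrow> 'a \<Rightarrow> 'a"
    and cadj :: "'a \<Rightarrow> 'a"
  assumes scaleC_of_real: "scaleC (complex_of_real r) x = scaleR r x"
    and scaleC_add_right: "scaleC a (x + y) = scaleC a x + scaleC a y"
    and scaleC_add_left: "scaleC (a + b) x = scaleC a x + scaleC b x"
    and scaleC_scaleC: "scaleC a (scaleC b x) = scaleC (a * b) x"
    and scaleC_mult_left: "scaleC a (x * y) = scaleC a x * y"
    and scaleC_mult_right: "scaleC a (x * y) = x * scaleC a y"
    and norm_scaleC: "norm (scaleC a x) = cmod a * norm x"
    and cadj_cadj: "cadj (cadj x) = x"
    and cadj_add: "cadj (x + y) = cadj x + cadj y"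
    and cadj_scaleC: "cadj (scaleC a x) = scaleC (cnj a) (cadj x)"
    and cadj_mult: "cadj (x * y) = cadj y * cadj x"
    and cstar_identity: "norm (cadj x * x) = (norm x)\<^sup>2"

definition cspan :: "'a::cstar_algebra set \<Rightarrow> 'a set" where
  "cspan S = {\<Sum>x\<in>T. scaleC (c x) x | T c. finite T \<and> T \<subseteq> S}"

definition clspan :: "'a::cstar_algebra set \<Rightarrow> 'a set" where
  "clspan S = closure (cspan S)"

definition cstar_subalgebra :: "'a::cstar_algebra set \<Rightarrow> bool" where
  "cstar_subalgebra C \<longleftrightarrow> 0 \<in> C \<and> closed C \<and>
     (\<forall>x\<in>C. \<forall>y\<in>C. x + y \<in> C \<and> x * y \<in> C) \<and>
     (\<forall>a. \<forall>x\<in>C. scaleC a x \<in> C) \<and>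
     (\<forall>x\<in>C. cadj x \<in> C)"

definition unitary :: "'a::cstar_algebra \<Rightarrow> bool" where
  "unitary u \<longleftrightarrow> cadj u * u = 1 \<and> u * cadj u = 1"

definition isometry :: "'a::cstar_algebra \<Rightarrow> bool" where
  "isometry s \<longleftrightarrow> cadj s * s = 1"

definition upow :: "'a::cstar_algebra \<Rightarrow> int \<Rightarrow> 'a" where
  "upow u m = (if 0 \<le> m then u ^ nat m else cadj u ^ nat (- m))"

definition Q2_relations :: "'a::cstar_algebra \<Rightarrow> 'a \<Rightarrow> bool" where
  "Q2_relations u s \<longleftrightarrow> unitary u \<and> isometry s \<and> s * u = u\<^sup>2 * s \<and>
     s * cadj s + u * s * cadj s * cadj u = 1"

text \<open>B_2 = closed span of u^m s_{2^n} s_{2^n}^* u^k, m,k \<in> \<int>, n \<ge> 0.\<close>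
definition B2 :: "'a::cstar_algebra \<Rightarrow> 'a \<Rightarrow> 'a set" where
  "B2 u s = clspan {upow u m * s ^ n * cadj (s ^ n) * upow u k | m k n. True}"

text \<open>F_2 = closed span of u^m s_{2^n} s_{2^n}^* u^{-k}, 0 \<le> m,k \<le> 2^n - 1.\<close>
definition F2 :: "'a::cstar_algebra \<Rightarrow> 'a \<Rightarrow> 'a set" where
  "F2 u s = clspan {upow u (int m) * s ^ n * cadj (s ^ n) * upow u (- int k) | m k n.
                     m < 2 ^ n \<and> k < 2 ^ n}"

end

theory Submission
  imports Defs
begin


lemma scaleC_zero_right[simp]: "scaleC c (0::'a::cstar_algebra) = 0"
  using scaleC_add_right[of c "0::'a" 0] by simp

lemma scaleC_zero_left[simp]: "scaleC 0 (x::'a::cstar_algebra) = 0"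
  using scaleC_of_real[of 0 x] by simp

lemma scaleC_one[simp]: "scaleC 1 (x::'a::cstar_algebra) = x"
  using scaleC_of_real[of 1 x] by simp

lemma scaleC_minus_right: "scaleC c (- (x::'a::cstar_algebra)) = - scaleC c x"
  using scaleC_add_right[of c x "-x"] by (simp add: add_eq_0_iff)

lemma scaleC_diff_right: "scaleC c ((x::'a::cstar_algebra) - y) = scaleC c x - scaleC c y"
  using scaleC_add_right[of c x "-y"] by (simp add: scaleC_minus_right)

lemma scaleC_minus_left: "scaleC (- c) (x::'a::cstar_algebra) = - scaleC c x"
  using scaleC_add_left[of c "-c" x] by (simp add: add_eq_0_iff)

lemma scaleC_diff_left: "scaleC (c - d) (x::'a::cstar_algebra) = scaleC c x - scaleC d x"
  using scaleC_add_left[of c "-d" x] by (simp add: scaleC_minus_left)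

lemma scaleC_sum_right: "scaleC c (sum f A) = (\<Sum>i\<in>A. scaleC c (f i::'a::cstar_algebra))"
  by (induction A rule: infinite_finite_induct) (auto simp: scaleC_add_right)

lemma cadj_zero[simp]: "cadj (0::'a::cstar_algebra) = 0"
  using cadj_add[of "0::'a" 0] by simp

lemma cadj_minus: "cadj (- (x::'a::cstar_algebra)) = - cadj x"
  using cadj_add[of x "-x"] by (simp add: add_eq_0_iff)

lemma cadj_diff: "cadj ((x::'a::cstar_algebra) - y) = cadj x - cadj y"
  using cadj_add[of x "-y"] by (simp add: cadj_minus)

lemma cadj_sum: "cadj (sum f A) = (\<Sum>i\<in>A. cadj (f i::'a::cstar_algebra))"
  by (induction A rule: infinite_finite_induct) (auto simp: cadj_add)

lemma cadj_one[simp]: "cadj (1::'a::cstar_algebra) = 1"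
proof -
  have "cadj (cadj (1::'a) * 1) = cadj 1 * cadj (cadj 1)" by (rule cadj_mult)
  then show ?thesis by (simp add: cadj_cadj)
qed

lemma cadj_power: "cadj ((x::'a::cstar_algebra) ^ n) = cadj x ^ n"
  by (induction n) (auto simp: cadj_mult power_commutes)

lemma norm_cadj_le: "norm (x::'a::cstar_algebra) \<le> norm (cadj x)"
proof (cases "x = 0")
  case True then show ?thesis by simp
next
  case False
  have "(norm x)^2 = norm (cadj x * x)" by (simp add: cstar_identity)
  also have "\<dots> \<le> norm (cadj x) * norm x" by (rule norm_mult_ineq)
  finally have "norm x * norm x \<le> norm (cadj x) * norm x" by (simp add: power2_eq_square)
  then show ?thesis using False by simp
qed

lemma norm_cadj[simp]: "norm (cadj (x::'a::cstar_algebra)) = norm x"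
  using norm_cadj_le[of x] norm_cadj_le[of "cadj x"] by (simp add: cadj_cadj)

lemma cstar_identity': "norm ((x::'a::cstar_algebra) * cadj x) = (norm x)^2"
  using cstar_identity[of "cadj x"] by (simp add: cadj_cadj)

lemma cadj_scaleR: "cadj (scaleR r (x::'a::cstar_algebra)) = scaleR r (cadj x)"
  using cadj_scaleC[of "complex_of_real r" x] by (simp add: scaleC_of_real)

lemma scaleC_mult_right': "(x::'a::cstar_algebra) * scaleC a y = scaleC a (x * y)"
  by (simp add: scaleC_mult_right)
lemma scaleC_mult_left': "scaleC a (x::'a::cstar_algebra) * y = scaleC a (x * y)"
  by (simp add: scaleC_mult_left)

lemma norm_proj_le1:
  assumes "cadj p = p" "p * p = (p::'a::cstar_algebra)"
  shows "norm p \<le> 1"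
proof -
  have "(norm p)^2 = norm p" using cstar_identity[of p] assms by simp
  then have "norm p * norm p = norm p * 1" by (simp add: power2_eq_square)
  then show ?thesis by (cases "norm p = 0") auto
qed

lemma norm_iso_le1:
  assumes "cadj s * s = (1::'a::cstar_algebra)"
  shows "norm s \<le> 1"
proof -
  have "(norm s)^2 = 1" using cstar_identity[of s] assms by simp
  then have "norm s = 1 \<or> norm s = -1" by (simp add: power2_eq_1_iff)
  then show ?thesis using norm_ge_zero[of s] by linarith
qed


locale q2 =
  fixes u s :: "'a::cstar_algebra"
  assumes rel: "Q2_relations u s"
begin

lemma uu1: "cadj u * u = 1" and uu2: "u * cadj u = 1" and ss1: "cadj s * s = 1"
  and su: "s * u = u^2 * s" and rel2: "s * cadj s + u * s * cadj s * cadj u = 1"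
  using rel by (auto simp: Q2_relations_def unitary_def isometry_def)

lemma upow_nat: "upow u (int n) = u ^ n"
  by (simp add: upow_def)

lemma upow_neg_nat: "upow u (- int n) = cadj u ^ n"
  by (cases "n = 0") (simp_all add: upow_def)

lemma upow_0[simp]: "upow u 0 = 1" by (simp add: upow_def)
lemma upow_1[simp]: "upow u 1 = u" by (simp add: upow_def)

lemma upow_cases: obtains n where "m = int n" | n where "m = - int n"
  by (metis int_cases2)

lemma vpow_u: "cadj u ^ Suc n * u = cadj u ^ n"
  by (simp only: power_Suc2 mult.assoc uu1 mult_1_right)
lemma upow_v: "u ^ Suc n * cadj u = u ^ n"
  by (simp only: power_Suc2 mult.assoc uu2 mult_1_right)

lemma upow_succ: "upow u (m + 1) = upow u m * u"
proof (cases m rule: upow_cases)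
  case (1 n)
  then have "m + 1 = int (Suc n)" by simp
  then show ?thesis using 1 by (simp only: upow_nat power_Suc2)
next
  case (2 n)
  show ?thesis
  proof (cases n)
    case 0 then show ?thesis using 2 by simp
  next
    case (Suc k)
    then have "m + 1 = - int k" using 2 by simp
    then show ?thesis using 2 Suc by (simp only: upow_neg_nat vpow_u)
  qed
qed

lemma upow_pred: "upow u (m - 1) = upow u m * cadj u"
proof (cases m rule: upow_cases)
  case (2 n)
  then have "m - 1 = - int (Suc n)" by simp
  then show ?thesis using 2 by (simp only: upow_neg_nat power_Suc2)
next
  case (1 n)
  show ?thesis
  proof (cases n)
    case 0 then show ?thesis using 1 by (simp add: upow_neg_nat[of 1, simplified])
  next
    case (Suc k)
    then have "m - 1 = int k" using 1 by simp
    then show ?thesis using 1 Suc by (simp only: upow_nat upow_v)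
  qed
qed

lemma upow_add: "upow u (a + b) = upow u a * upow u b"
proof (induction b rule: int_induct[where k=0])
  case base then show ?case by simp
next
  case (step1 i)
  have "upow u (a + (i + 1)) = upow u (a + i) * u" using upow_succ[of "a+i"] by (simp add: add.assoc)
  also have "\<dots> = upow u a * (upow u i * u)" using step1 by (simp add: mult.assoc)
  also have "\<dots> = upow u a * upow u (i + 1)" by (simp add: upow_succ)
  finally show ?case .
next
  case (step2 i)
  have "upow u (a + (i - 1)) = upow u (a + i) * cadj u" using upow_pred[of "a+i"] by (simp add: algebra_simps)
  also have "\<dots> = upow u a * (upow u i * cadj u)" using step2 by (simp add: mult.assoc)
  also have "\<dots> = upow u a * upow u (i - 1)" by (simp add: upow_pred)
  finally show ?case .
qed

lemma upow_inv: "upow u m * upow u (- m) = 1"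
  using upow_add[of m "-m"] by simp

lemma upow_inv2: "upow u (- m) * upow u m = 1"
  using upow_add[of "-m" m] by simp

lemma upow_mult_comm: "upow u a * upow u b = upow u b * upow u a"
  by (simp flip: upow_add add: add.commute)

lemma cadj_upow: "cadj (upow u m) = upow u (- m)"
proof (cases m rule: upow_cases)
  case (1 n) then show ?thesis
    by (metis cadj_power upow_nat upow_neg_nat)
next
  case (2 n) then show ?thesis
    by (metis cadj_cadj cadj_power minus_minus upow_nat upow_neg_nat)
qed

lemma norm_u: "norm u \<le> 1" using norm_iso_le1[OF uu1] .
lemma norm_pow_le1: "norm (x::'a) \<le> 1 \<Longrightarrow> norm (x ^ k) \<le> 1"
  by (rule order_trans[OF norm_power_ineq power_le_one]) auto

lemma norm_upow: "norm (upow u m) \<le> 1"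
proof -
  have "norm (cadj u) \<le> 1" using norm_u by simp
  then show ?thesis using norm_u unfolding upow_def
    by (simp add: norm_pow_le1)
qed

lemma upow_2: "upow u 2 = u^2"
  using upow_nat[of 2] by simp

lemma s_v: "s * cadj u = cadj u ^ 2 * s"
proof -
  have "cadj u ^ 2 * (s * u) * cadj u = cadj u ^ 2 * (u^2 * s) * cadj u" using su by simp
  moreover have "cadj u ^ 2 * (s * u) * cadj u = cadj u ^ 2 * s" by (simp add: mult.assoc uu2)
  moreover have "cadj u ^ 2 * (u^2 * s) * cadj u = s * cadj u"
  proof -
    have "cadj u ^ 2 * u^2 = 1"
      by (metis upow_inv2 upow_nat upow_neg_nat)
    then show ?thesis by (simp add: mult.assoc flip: mult.assoc[of "cadj u ^ 2" "u^2"])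
  qed
  ultimately show ?thesis by simp
qed

lemma s_upow: "s * upow u q = upow u (2 * q) * s"
proof (induction q rule: int_induct[where k=0])
  case base then show ?case by simp
next
  case (step1 i)
  have "s * upow u (i + 1) = upow u (2 * i) * s * u" using step1 by (simp add: upow_succ flip: mult.assoc)
  also have "\<dots> = upow u (2 * i) * u^2 * s" by (simp add: mult.assoc su)
  also have "\<dots> = upow u (2 * (i + 1)) * s"
    by (simp add: upow_add distrib_left upow_2)
  finally show ?case .
next
  case (step2 i)
  have "s * upow u (i - 1) = upow u (2 * i) * s * cadj u" using step2 by (simp add: upow_pred flip: mult.assoc)
  also have "\<dots> = upow u (2 * i) * cadj u ^ 2 * s" by (simp add: mult.assoc s_v)
  also have "\<dots> = upow u (2 * (i - 1)) * s"
    using upow_add[of "2*i" "-2"] upow_neg_nat[of 2] by (simp add: algebra_simps)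
  finally show ?case .
qed

lemma spow_upow: "s ^ n * upow u q = upow u (2 ^ n * q) * s ^ n"
proof (induction n arbitrary: q)
  case 0 then show ?case by simp
next
  case (Suc n)
  have "s ^ Suc n * upow u q = s * (s ^ n * upow u q)" by (simp add: mult.assoc)
  also have "\<dots> = s * upow u (2 ^ n * q) * s ^ n" using Suc by (simp add: mult.assoc)
  also have "\<dots> = upow u (2 ^ Suc n * q) * s ^ Suc n" by (simp add: s_upow mult.assoc mult.left_commute)
  finally show ?case .
qed

lemma iso_pow: "cadj (s ^ n) * s ^ n = 1"
proof (induction n)
  case 0 then show ?case by simp
next
  case (Suc n)
  have "cadj (s ^ Suc n) * s ^ Suc n = cadj s * (cadj (s^n) * s ^ n) * s"
    by (simp only: power_Suc2 cadj_mult mult.assoc)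
  then show ?case using Suc ss1 by simp
qed

end


lemma sum_lessThan_split: fixes m k :: nat shows "(\<Sum>a<m+k. f a) = (\<Sum>a<m. f a) + (\<Sum>a<k. f (a + m)::'b::comm_monoid_add)"
  by (induction k) (simp_all add: ac_simps)

context q2 begin

lemma sus0: "cadj s * u * s = 0"
proof -
  define z where "z = cadj s * u * s"
  have cz: "cadj z = cadj s * cadj u * s" unfolding z_def by (simp add: cadj_mult cadj_cadj mult.assoc)
  have "cadj s * (s * cadj s + u * s * cadj s * cadj u) * s = 1" using rel2 ss1 by simp
  moreover have "cadj s * (s * cadj s + u * s * cadj s * cadj u) * s = cadj s * s * (cadj s * s) + z * cadj z"
    unfolding z_def by (simp add: distrib_left distrib_right mult.assoc cadj_mult cadj_cadj)
  ultimately have "cadj s * s * (cadj s * s) + z * cadj z = 1" by simp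
  then have "z * cadj z = 0" using ss1 by simp
  then have "(norm z)^2 = 0" using cstar_identity'[of z] by simp
  then show ?thesis unfolding z_def by simp
qed

lemma s_upow_s: "cadj s * upow u l * s = (if even l then upow u (l div 2) else 0)"
proof (cases "even l")
  case True
  then obtain q where l: "l = 2 * q" by blast
  have "cadj s * upow u l * s = cadj s * (s * upow u q)" by (simp add: l s_upow mult.assoc)
  also have "\<dots> = upow u q" by (simp add: ss1 flip: mult.assoc)
  finally show ?thesis using l True by simp
next
  case False
  then obtain q where l: "l = 1 + 2 * q" by (metis oddE add.commute)
  have "cadj s * upow u l * s = cadj s * u * (upow u (2*q) * s)" by (simp add: l upow_add mult.assoc)
  also have "\<dots> = (cadj s * u * s) * upow u q" by (simp add: s_upow mult.assoc)
  also have "\<dots> = 0" by (simp add: sus0)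
  finally show ?thesis using False by simp
qed

lemma dvd_pow2_Suc: "(2::int) ^ Suc n dvd l \<longleftrightarrow> 2 ^ n dvd l \<and> even (l div 2 ^ n)"
proof
  assume "2 ^ Suc n dvd l"
  then obtain k where "l = 2 ^ n * (2 * k)" by (auto simp: power_Suc2 mult.assoc elim!: dvdE)
  then show "2 ^ n dvd l \<and> even (l div 2 ^ n)" by simp
next
  assume "2 ^ n dvd l \<and> even (l div 2 ^ n)"
  then obtain k where "l = 2 ^ n * k" "even k" by (auto elim!: dvdE)
  then show "2 ^ Suc n dvd l" by (auto simp: power_Suc2 elim!: evenE)
qed

lemma spow_upow_spow: "cadj (s ^ n) * upow u l * s ^ n = (if 2 ^ n dvd l then upow u (l div 2 ^ n) else 0)"
proof (induction n)
  case 0 then show ?case by (simp add: iso_pow)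
next
  case (Suc n)
  have "cadj (s ^ Suc n) * upow u l * s ^ Suc n = cadj s * (cadj (s ^ n) * upow u l * s ^ n) * s"
    by (simp only: power_Suc2 cadj_mult mult.assoc)
  also have "\<dots> = (if 2 ^ Suc n dvd l then upow u (l div 2 ^ Suc n) else 0)"
  proof (cases "2 ^ n dvd l")
    case True
    have "l div 2 ^ Suc n = l div (2 ^ n * 2)" by (simp only: power_Suc2)
    also have "\<dots> = l div 2 ^ n div 2" by (rule zdiv_zmult2_eq) simp
    finally have e: "l div 2 ^ n div 2 = l div 2 ^ Suc n" by simp
    show ?thesis using True Suc.IH s_upow_s[of "l div 2^n"] dvd_pow2_Suc[of n l] e by simp
  next
    case False
    then show ?thesis using Suc.IH dvd_pow2_Suc[of n l] by simp
  qed
  finally show ?case .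
qed

definition P :: "nat \<Rightarrow> 'a" where "P n = s ^ n * cadj (s ^ n)"

lemma P_idem: "P n * P n = P n"
  unfolding P_def by (simp add: mult.assoc iso_pow flip: mult.assoc[of "cadj (s^n)"])

lemma cadj_P: "cadj (P n) = P n"
  unfolding P_def by (simp add: cadj_mult cadj_cadj)

lemma norm_P: "norm (P n) \<le> 1"
  using norm_proj_le1[OF cadj_P P_idem] .

lemma norm_spow: "norm (s ^ n) \<le> 1"
  using norm_iso_le1[OF iso_pow] .

lemma P_upow_P: "P n * upow u l * P n = (if 2 ^ n dvd l then upow u l * P n else 0)"
proof -
  have eq: "P n * upow u l * P n = s ^ n * (cadj (s ^ n) * upow u l * s ^ n) * cadj (s ^ n)"
    unfolding P_def by (simp add: mult.assoc)
  show ?thesis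
  proof (cases "2 ^ n dvd l")
    case True
    have l: "2 ^ n * (l div 2 ^ n) = l" using True by simp
    have "P n * upow u l * P n = s ^ n * upow u (l div 2 ^ n) * cadj (s ^ n)"
      using True by (simp only: eq spow_upow_spow if_True)
    also have "\<dots> = upow u l * P n" by (simp add: spow_upow l P_def mult.assoc)
    finally show ?thesis using True by simp
  next
    case False
    then show ?thesis by (simp only: eq spow_upow_spow if_False) simp
  qed
qed

lemma cadj_spow_upow: "cadj (s ^ n) * upow u (2 ^ n * q) = upow u q * cadj (s ^ n)"
proof -
  have "cadj (s ^ n * upow u (- q)) = cadj (upow u (2 ^ n * (- q)) * s ^ n)" by (simp add: spow_upow)
  then show ?thesis by (simp add: cadj_mult cadj_upow)
qed

lemma upow_P_comm: "upow u (2 ^ n * q) * P n = P n * upow u (2 ^ n * q)"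
proof -
  have "upow u (2 ^ n * q) * P n = (upow u (2 ^ n * q) * s ^ n) * cadj (s ^ n)"
    by (simp add: P_def mult.assoc)
  also have "\<dots> = s ^ n * (upow u q * cadj (s ^ n))" by (subst spow_upow[symmetric]) (simp only: mult.assoc)
  also have "\<dots> = s ^ n * (cadj (s ^ n) * upow u (2 ^ n * q))" by (simp add: cadj_spow_upow)
  finally show ?thesis by (simp add: P_def mult.assoc)
qed

lemma upow_P_comm': "2 ^ n dvd l \<Longrightarrow> upow u l * P n = P n * upow u l"
  using upow_P_comm by (auto elim!: dvdE)

lemma P_step: "P k = P (Suc k) + upow u (2 ^ k) * P (Suc k) * upow u (- (2 ^ k))"
proof -
  have A: "P (Suc k) = s ^ k * s * cadj (s ^ k * s)" unfolding P_def by (simp only: power_Suc2)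
  have B: "s ^ k * u = upow u (2 ^ k) * s ^ k" using spow_upow[of k 1] by simp
  have "P k = s ^ k * (s * cadj s + u * s * cadj s * cadj u) * cadj (s ^ k)"
    unfolding P_def by (simp add: rel2)
  also have "\<dots> = s ^ k * s * cadj (s ^ k * s) + (s ^ k * u) * s * cadj ((s ^ k * u) * s)"
    by (simp add: distrib_left distrib_right cadj_mult mult.assoc)
  also have "\<dots> = s ^ k * s * cadj (s ^ k * s) + upow u (2 ^ k) * (s ^ k * s * cadj (s ^ k * s)) * upow u (- (2 ^ k))"
    unfolding B by (simp add: cadj_mult cadj_upow mult.assoc)
  finally show ?thesis by (simp only: A)
qed

definition G :: "int \<Rightarrow> nat \<Rightarrow> int \<Rightarrow> 'a" where
  "G m n j = upow u m * P n * upow u j"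

lemma gen_eq: "upow u m * s ^ n * cadj (s ^ n) * upow u k = G m n k"
  unfolding G_def P_def by (simp add: mult.assoc)

lemma G_mult: "G a n b * G c n d = (if 2 ^ n dvd (b + c) then G (a + b + c) n d else 0)"
proof -
  have eq: "G a n b * G c n d = upow u a * (P n * upow u (b + c) * P n) * upow u d"
    unfolding G_def by (simp add: upow_add mult.assoc)
  show ?thesis
  proof (cases "2 ^ n dvd (b + c)")
    case True
    then have "G a n b * G c n d = upow u a * (upow u (b + c) * P n) * upow u d"
      by (simp only: eq P_upow_P if_True)
    then show ?thesis using True by (simp add: G_def upow_add mult.assoc add.assoc)
  next
    case False
    then show ?thesis by (simp only: eq P_upow_P if_False) simp
  qed
qed

lemma cadj_G: "cadj (G m n j) = G (- j) n (- m)"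
  unfolding G_def by (simp add: cadj_mult cadj_upow cadj_P mult.assoc)

lemma G_shift: "G m n j = G (m + 2 ^ n * t) n (j - 2 ^ n * t)"
proof -
  have j: "upow u (j - 2 ^ n * t) = upow u (- (2 ^ n * t)) * upow u j"
    using upow_add[of "- (2 ^ n * t)" j] by simp
  have "G (m + 2 ^ n * t) n (j - 2 ^ n * t) = upow u m * (upow u (2 ^ n * t) * P n) * upow u (- (2 ^ n * t)) * upow u j"
    unfolding G_def j by (simp add: upow_add mult.assoc)
  also have "\<dots> = upow u m * P n * (upow u (2 ^ n * t) * upow u (- (2 ^ n * t))) * upow u j"
    by (simp add: upow_P_comm mult.assoc)
  finally show ?thesis by (simp add: upow_inv G_def)
qed

lemma G_step: "G m k j = G m (Suc k) j + G (m + 2 ^ k) (Suc k) (j - 2 ^ k)"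
proof -
  have "G m k j = upow u m * (P (Suc k) + upow u (2 ^ k) * P (Suc k) * upow u (- (2 ^ k))) * upow u j"
    unfolding G_def by (subst P_step[of k]) (rule refl)
  moreover have "upow u (j - 2 ^ k) = upow u (- (2 ^ k)) * upow u j"
    using upow_add[of "- (2 ^ k)" j] by simp
  ultimately show ?thesis unfolding G_def
    by (simp add: distrib_left distrib_right upow_add mult.assoc)
qed

lemma upow_G: "upow u l * G m n j = G (l + m) n j"
  unfolding G_def by (simp add: upow_add mult.assoc)

lemma G_upow: "G m n j * upow u l = G m n (j + l)"
  unfolding G_def by (simp add: upow_add mult.assoc)

lemma G_comm: "upow u (2 ^ n * q) * G m n j = G m n j * upow u (2 ^ n * q)"
  unfolding upow_G G_upow using G_shift[of m n "j + 2 ^ n * q" q]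
  by (simp add: add.commute)

lemma norm_G: "norm (G m n j) \<le> 1"
proof -
  have "norm (G m n j) \<le> norm (upow u m * P n) * norm (upow u j)"
    unfolding G_def by (rule norm_mult_ineq)
  also have "\<dots> \<le> norm (upow u m) * norm (P n) * norm (upow u j)"
    by (rule mult_right_mono[OF norm_mult_ineq norm_ge_zero])
  also have "\<dots> \<le> 1" using norm_upow[of m] norm_upow[of j] norm_P[of n]
    by (simp add: mult_le_one)
  finally show ?thesis .
qed

lemma G_00: "G 0 n 0 = P n" by (simp add: G_def)

lemma P0: "P 0 = 1" by (simp add: P_def)

end

context q2 begin
lemma sum_diag: "(\<Sum>a<2 ^ n. G (int a) n (- int a)) = 1"
proof (induction n)
  case 0 then show ?case by (simp add: G_def P0)
next
  case (Suc n)
  have "(\<Sum>a<2 ^ Suc n. G (int a) (Suc n) (- int a)) =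
        (\<Sum>a<2 ^ n. G (int a) (Suc n) (- int a)) + (\<Sum>a<2 ^ n. G (int (a + 2 ^ n)) (Suc n) (- int (a + 2 ^ n)))"
    using sum_lessThan_split[of "\<lambda>a. G (int a) (Suc n) (- int a)" "2^n" "2^n"] by (simp add: mult_2)
  also have "\<dots> = (\<Sum>a<2 ^ n. G (int a) (Suc n) (- int a) + G (int a + 2 ^ n) (Suc n) (- int a - 2 ^ n))"
  proof -
    have "\<And>a. G (int (a + 2 ^ n)) (Suc n) (- int (a + 2 ^ n)) = G (int a + 2 ^ n) (Suc n) (- int a - 2 ^ n)"
      by (simp add: algebra_simps)
    then show ?thesis by (simp only: sum.distrib)
  qed
  also have "\<dots> = (\<Sum>a<2 ^ n. G (int a) n (- int a))"
    by (rule sum.cong[OF refl], rule G_step[symmetric])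
  finally show ?case using Suc by simp
qed

end


definition subsp :: "'a::cstar_algebra set \<Rightarrow> bool" where
  "subsp V \<longleftrightarrow> 0 \<in> V \<and> (\<forall>x\<in>V. \<forall>y\<in>V. x + y \<in> V) \<and> (\<forall>c. \<forall>x\<in>V. scaleC c x \<in> V)"

lemma subspD: assumes "subsp V"
  shows "0 \<in> V" "x \<in> V \<Longrightarrow> y \<in> V \<Longrightarrow> x + y \<in> V" "x \<in> V \<Longrightarrow> scaleC c x \<in> V"
  using assms by (auto simp: subsp_def)

lemma subsp_minus: "subsp V \<Longrightarrow> x \<in> V \<Longrightarrow> - x \<in> V"
  using subspD(3)[of V x "-1"] scaleC_of_real[of "-1" x] by simp

lemma subsp_diff: "subsp V \<Longrightarrow> x \<in> V \<Longrightarrow> y \<in> V \<Longrightarrow> x - y \<in> V"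
  using subspD(2)[of V x "-y"] subsp_minus[of V y] by simp

lemma subsp_sum: "subsp V \<Longrightarrow> (\<And>i. i \<in> A \<Longrightarrow> f i \<in> V) \<Longrightarrow> sum f A \<in> V"
  by (induction A rule: infinite_finite_induct) (auto simp: subspD)

lemma subsp_UNIV: "subsp UNIV" by (simp add: subsp_def)

lemma subsp_Int: "subsp V \<Longrightarrow> subsp W \<Longrightarrow> subsp (V \<inter> W)"
  by (simp add: subsp_def)

lemma subsp_cspan: "subsp (cspan S)"
  unfolding subsp_def
proof (intro conjI ballI allI)
  show "0 \<in> cspan S" unfolding cspan_def by (rule CollectI, rule exI[of _ "{}"]) auto
next
  fix x y assume "x \<in> cspan S" "y \<in> cspan S"
  then obtain T c T' c' where T: "finite T" "T \<subseteq> S" "x = (\<Sum>x\<in>T. scaleC (c x) x)"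
    and T': "finite T'" "T' \<subseteq> S" "y = (\<Sum>x\<in>T'. scaleC (c' x) x)"
    unfolding cspan_def by blast
  define d where "d z = (if z \<in> T then c z else 0) + (if z \<in> T' then c' z else 0)" for z
  have "(\<Sum>z\<in>T \<union> T'. scaleC (if z \<in> T then c z else 0) z) = (\<Sum>z\<in>T. scaleC (if z \<in> T then c z else 0) z)"
    by (rule sum.mono_neutral_right) (use T T' in auto)
  then have "x = (\<Sum>z\<in>T \<union> T'. scaleC (if z \<in> T then c z else 0) z)"
    using T by simp
  moreover have "(\<Sum>z\<in>T \<union> T'. scaleC (if z \<in> T' then c' z else 0) z) = (\<Sum>z\<in>T'. scaleC (if z \<in> T' then c' z else 0) z)"
    by (rule sum.mono_neutral_right) (use T T' in auto)
  then have "y = (\<Sum>z\<in>T \<union> T'. scaleC (if z \<in> T' then c' z else 0) z)"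
    using T' by simp
  ultimately have "x + y = (\<Sum>z\<in>T \<union> T'. scaleC (d z) z)"
    by (simp add: d_def scaleC_add_left sum.distrib)
  then show "x + y \<in> cspan S" unfolding cspan_def using T T' by blast
next
  fix a x assume "x \<in> cspan S"
  then obtain T c where T: "finite T" "T \<subseteq> S" "x = (\<Sum>x\<in>T. scaleC (c x) x)"
    unfolding cspan_def by blast
  then have ax: "scaleC a x = (\<Sum>z\<in>T. scaleC (a * c z) z)"
    by (simp add: scaleC_sum_right scaleC_scaleC)
  show "scaleC a x \<in> cspan S" unfolding cspan_def
    by (intro CollectI exI[of _ T] exI[of _ "\<lambda>z. a * c z"]) (simp add: ax T(1,2))
qed

lemma cspan_superset: "S \<subseteq> cspan S"
proof
  fix x assume "x \<in> S"
  then show "x \<in> cspan S" unfolding cspan_def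
    by (intro CollectI exI[of _ "{x}"] exI[of _ "\<lambda>_. 1"]) simp
qed

lemma cspan_least: assumes "subsp V" "S \<subseteq> V" shows "cspan S \<subseteq> V"
proof
  fix x assume "x \<in> cspan S"
  then obtain T c where T: "finite T" "T \<subseteq> S" "x = (\<Sum>x\<in>T. scaleC (c x) x)"
    unfolding cspan_def by blast
  show "x \<in> V" unfolding T(3) using T assms by (intro subsp_sum) (auto simp: subspD)
qed

lemma cspan_induct[consumes 1, case_names subsp base]:
  assumes "x \<in> cspan S" "subsp V" "\<And>y. y \<in> S \<Longrightarrow> y \<in> V"
  shows "x \<in> V"
  using cspan_least[of V S] assms by blast

lemma cspan_eventually:
  assumes "\<And>n. subsp (V n)" "\<And>y. y \<in> S \<Longrightarrow> eventually (\<lambda>n. y \<in> V n) sequentially"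
    and "x \<in> cspan S"
  shows "eventually (\<lambda>n. x \<in> V n) sequentially"
proof -
  obtain T c where T: "finite T" "T \<subseteq> S" "x = (\<Sum>x\<in>T. scaleC (c x) x)"
    using assms(3) unfolding cspan_def by blast
  have "eventually (\<lambda>n. \<forall>y\<in>T. y \<in> V n) sequentially"
    using T assms(2) by (simp add: eventually_ball_finite_distrib subset_iff)
  then show ?thesis
  proof (rule eventually_mono)
    fix n assume "\<forall>y\<in>T. y \<in> V n"
    then show "x \<in> V n" unfolding T(3) using assms(1)[of n]
      by (intro subsp_sum) (auto simp: subspD)
  qed
qed

lemma cspan_mono: "S \<subseteq> T \<Longrightarrow> cspan S \<subseteq> cspan T"
  using cspan_least[OF subsp_cspan, of S T] cspan_superset[of T] by blast

lemma bounded_linear_scaleC: "bounded_linear (\<lambda>x::'a::cstar_algebra. scaleC c x)"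
proof (rule bounded_linear_intro[where K="cmod c"])
  show "scaleC c (x + y) = scaleC c x + scaleC c y" for x y :: 'a by (rule scaleC_add_right)
  show "scaleC c (scaleR r x) = scaleR r (scaleC c x)" for r and x :: 'a
    by (simp add: scaleC_scaleC mult.commute flip: scaleC_of_real)
  show "norm (scaleC c x) \<le> norm x * cmod c" for x :: 'a by (simp add: norm_scaleC mult.commute)
qed

lemma bounded_linear_cadj: "bounded_linear (cadj :: 'a::cstar_algebra \<Rightarrow> 'a)"
  by (rule bounded_linear_intro[where K=1]) (auto simp: cadj_add cadj_scaleR)

lemma closure_seq: "(x::'a::metric_space) \<in> closure S \<longleftrightarrow> (\<exists>f. (\<forall>n. f n \<in> S) \<and> f \<longlonglongrightarrow> x)"
  by (rule closure_sequential)

lemma closure_subsp: assumes "subsp V" shows "subsp (closure V)"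
  unfolding subsp_def
proof (intro conjI ballI allI)
  show "0 \<in> closure V" using subspD(1)[OF assms] closure_subset by blast
next
  fix x y assume "x \<in> closure V" "y \<in> closure V"
  then obtain f g where "\<forall>n. f n \<in> V" "f \<longlonglongrightarrow> x" "\<forall>n. g n \<in> V" "g \<longlonglongrightarrow> y"
    unfolding closure_seq by blast
  then show "x + y \<in> closure V" unfolding closure_seq
    by (intro exI[of _ "\<lambda>n. f n + g n"]) (auto intro: tendsto_add subspD[OF assms])
next
  fix c x assume "x \<in> closure V"
  then obtain f where "\<forall>n. f n \<in> V" "f \<longlonglongrightarrow> x" unfolding closure_seq by blast
  then show "scaleC c x \<in> closure V" unfolding closure_seq
    by (intro exI[of _ "\<lambda>n. scaleC c (f n)"])
       (auto intro: bounded_linear.tendsto[OF bounded_linear_scaleC] subspD[OF assms])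
qed

lemma closure_mult_closed:
  assumes "\<And>x y. x \<in> V \<Longrightarrow> y \<in> V \<Longrightarrow> x * y \<in> V" "x \<in> closure V" "y \<in> closure V"
  shows "x * y \<in> closure (V::'a::cstar_algebra set)"
proof -
  obtain f g where "\<forall>n. f n \<in> V" "f \<longlonglongrightarrow> x" "\<forall>n. g n \<in> V" "g \<longlonglongrightarrow> y"
    using assms(2,3) unfolding closure_seq by blast
  then show ?thesis unfolding closure_seq
    by (intro exI[of _ "\<lambda>n. f n * g n"]) (auto intro: tendsto_mult assms(1))
qed

lemma closure_cadj_closed:
  assumes "\<And>x. x \<in> V \<Longrightarrow> cadj x \<in> V" "x \<in> closure V"
  shows "cadj x \<in> closure (V::'a::cstar_algebra set)"
proof -
  obtain f where "\<forall>n. f n \<in> V" "f \<longlonglongrightarrow> x"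
    using assms(2) unfolding closure_seq by blast
  then show ?thesis unfolding closure_seq
    by (intro exI[of _ "\<lambda>n. cadj (f n)"]) (auto intro: bounded_linear.tendsto[OF bounded_linear_cadj] assms(1))
qed

lemma cstar_subalgebra_clspan:
  assumes "\<And>x y. x \<in> cspan S \<Longrightarrow> y \<in> cspan S \<Longrightarrow> x * y \<in> cspan S"
    and "\<And>x. x \<in> cspan S \<Longrightarrow> cadj x \<in> cspan S"
  shows "cstar_subalgebra (clspan S)"
proof -
  have "subsp (clspan S)" unfolding clspan_def by (rule closure_subsp[OF subsp_cspan])
  then show ?thesis unfolding cstar_subalgebra_def clspan_def
    using closure_mult_closed[OF assms(1)] closure_cadj_closed[OF assms(2)]
    by (auto simp: subsp_def)
qed

lemma clspan_approx:
  assumes "x \<in> clspan S" "e > 0"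
  shows "\<exists>y\<in>cspan S. norm (x - y) < e"
  using assms unfolding clspan_def closure_approachable dist_norm by (metis norm_minus_commute)

lemma cstar_subsp: "cstar_subalgebra C \<Longrightarrow> subsp C"
  by (simp add: cstar_subalgebra_def subsp_def)

lemma closed_clspan: "closed (clspan S)" unfolding clspan_def by simp

lemma clspan_least: "cstar_subalgebra C \<Longrightarrow> S \<subseteq> C \<Longrightarrow> clspan S \<subseteq> C"
  unfolding clspan_def using cspan_least[of C S] cstar_subsp[of C]
  by (simp add: closure_minimal cstar_subalgebra_def)


lemma cspan_mult_closed:
  assumes "\<And>x y. x \<in> S \<Longrightarrow> y \<in> S \<Longrightarrow> x * y \<in> cspan S"
    and "x \<in> cspan S" "y \<in> cspan (S::'a::cstar_algebra set)"
  shows "x * y \<in> cspan S"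
proof -
  have L: "a * y \<in> cspan S" if "a \<in> S" "y \<in> cspan S" for a y
  proof -
    have "cspan S \<subseteq> {y. a * y \<in> cspan S}"
    proof (rule cspan_least)
      show "subsp {y. a * y \<in> cspan S}" using subsp_cspan[of S]
        by (simp add: subsp_def distrib_left scaleC_mult_right')
      show "S \<subseteq> {y. a * y \<in> cspan S}" using assms(1) that(1) by auto
    qed
    then show ?thesis using that(2) by auto
  qed
  have "cspan S \<subseteq> {x. \<forall>y\<in>cspan S. x * y \<in> cspan S}"
  proof (rule cspan_least)
    show "subsp {x. \<forall>y\<in>cspan S. x * y \<in> cspan S}" using subsp_cspan[of S]
      by (simp add: subsp_def distrib_right scaleC_mult_left')
    show "S \<subseteq> {x. \<forall>y\<in>cspan S. x * y \<in> cspan S}" using L by auto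
  qed
  then show ?thesis using assms(2,3) by auto
qed

lemma cspan_cadj_closed:
  assumes "\<And>x. x \<in> S \<Longrightarrow> cadj x \<in> cspan S" and "x \<in> cspan (S::'a::cstar_algebra set)"
  shows "cadj x \<in> cspan S"
proof -
  have "cspan S \<subseteq> {x. cadj x \<in> cspan S}"
  proof (rule cspan_least)
    show "subsp {x. cadj x \<in> cspan S}" using subsp_cspan[of S]
      by (simp add: subsp_def cadj_add cadj_scaleC)
    show "S \<subseteq> {x. cadj x \<in> cspan S}" using assms(1) by auto
  qed
  then show ?thesis using assms(2) by auto
qed

lemma int_dvd_small: "int b < 2 ^ n \<Longrightarrow> int c < 2 ^ n \<Longrightarrow> (2::int) ^ n dvd (int c - int b) \<longleftrightarrow> b = c"
proof
  assume h: "int b < 2 ^ n" "int c < 2 ^ n" "(2::int) ^ n dvd (int c - int b)"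
  show "b = c"
  proof (rule ccontr)
    assume "b \<noteq> c"
    then have "int c - int b \<noteq> 0" by simp
    from dvd_imp_le_int[OF this h(3)] have "2 ^ n \<le> \<bar>int c - int b\<bar>" by simp
    moreover have "\<bar>int c - int b\<bar> < 2 ^ n"
      using h(1,2) of_nat_0_le_iff[of b] of_nat_0_le_iff[of c] unfolding abs_less_iff by linarith
    ultimately show False by simp
  qed
qed simp

context q2 begin

definition e :: "nat \<Rightarrow> nat \<Rightarrow> nat \<Rightarrow> 'a" where "e n a b = G (int a) n (- int b)"

definition Fgen :: "nat \<Rightarrow> 'a set" where "Fgen n = {e n a b | a b. a < 2 ^ n \<and> b < 2 ^ n}"

definition A :: "nat \<Rightarrow> 'a set" where "A n = cspan (Fgen n)"

definition F2g :: "'a set" where "F2g = {e n a b | a b n. a < 2 ^ n \<and> b < 2 ^ n}"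

definition B2g :: "'a set" where "B2g = {G m n k | m k n. True}"

definition W :: "nat \<Rightarrow> 'a set" where "W n = cspan {G m n k | m k. True}"

lemma F2_eq: "F2 u s = clspan F2g"
  unfolding F2_def F2g_def gen_eq e_def by simp

lemma B2_eq: "B2 u s = clspan B2g"
  unfolding B2_def B2g_def gen_eq by simp

lemma e_mult: "a < 2 ^ n \<Longrightarrow> b < 2 ^ n \<Longrightarrow> c < 2 ^ n \<Longrightarrow> d < 2 ^ n \<Longrightarrow>
   e n a b * e n c d = (if b = c then e n a d else 0)"
  unfolding e_def G_mult using int_dvd_small[of b n c]
  by (auto simp: algebra_simps)

lemma cadj_e: "cadj (e n a b) = e n b a"
  unfolding e_def cadj_G by simp

lemma norm_e: "norm (e n a b) \<le> 1" unfolding e_def by (rule norm_G)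

lemma e_00: "e n 0 0 = P n" unfolding e_def by (simp add: G_00)

lemma sum_diag_e: "(\<Sum>a<2 ^ n. e n a a) = 1"
  unfolding e_def using sum_diag .

lemma subsp_A: "subsp (A n)" unfolding A_def by (rule subsp_cspan)

lemma e_in_A: "a < 2 ^ n \<Longrightarrow> b < 2 ^ n \<Longrightarrow> e n a b \<in> A n"
proof -
  assume "a < 2 ^ n" "b < 2 ^ n"
  then have "e n a b \<in> Fgen n" unfolding Fgen_def by auto
  then show ?thesis unfolding A_def by (rule subsetD[OF cspan_superset])
qed

lemma A_mult: "x \<in> A n \<Longrightarrow> y \<in> A n \<Longrightarrow> x * y \<in> A n"
  unfolding A_def
proof (rule cspan_mult_closed)
  fix x y assume "x \<in> Fgen n" "y \<in> Fgen n"
  then obtain a b c d where x: "x = e n a b" "a < 2 ^ n" "b < 2 ^ n" and y: "y = e n c d" "c < 2 ^ n" "d < 2 ^ n"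
    unfolding Fgen_def by blast
  show "x * y \<in> cspan (Fgen n)"
    using e_mult[OF x(2,3) y(2,3)] subspD(1)[OF subsp_A] e_in_A[OF x(2) y(3)] unfolding A_def x y
    by simp
qed

lemma A_cadj: "x \<in> A n \<Longrightarrow> cadj x \<in> A n"
  unfolding A_def
proof (rule cspan_cadj_closed)
  fix x assume "x \<in> Fgen n"
  then obtain a b where x: "x = e n a b" "a < 2 ^ n" "b < 2 ^ n"
    unfolding Fgen_def by blast
  show "cadj x \<in> cspan (Fgen n)"
    using cadj_e e_in_A[OF x(3) x(2)] unfolding A_def x by simp
qed

lemma e_refine: "k \<le> n \<Longrightarrow> a < 2 ^ k \<Longrightarrow> b < 2 ^ k \<Longrightarrow> e k a b \<in> A n"
proof (induction "n - k" arbitrary: k a b)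
  case 0 then show ?case using e_in_A by simp
next
  case (Suc d)
  then have kn: "Suc k \<le> n" "d = n - Suc k" by auto
  have eq: "e k a b = e (Suc k) a b + e (Suc k) (a + 2 ^ k) (b + 2 ^ k)"
    unfolding e_def using G_step[of "int a" k "- int b"] by (simp add: algebra_simps)
  have "e (Suc k) a b \<in> A n" using Suc.hyps(1)[OF kn(2) kn(1)] Suc.prems by simp
  moreover have "e (Suc k) (a + 2 ^ k) (b + 2 ^ k) \<in> A n"
    using Suc.hyps(1)[OF kn(2) kn(1)] Suc.prems by simp
  ultimately show ?case unfolding eq by (rule subspD(2)[OF subsp_A])
qed

lemma A_sub_F2g: "A n \<subseteq> cspan F2g"
  unfolding A_def Fgen_def F2g_def by (rule cspan_mono) blast

lemma F2g_eventually: "x \<in> F2g \<Longrightarrow> eventually (\<lambda>n. x \<in> A n) sequentially"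
proof -
  assume "x \<in> F2g"
  then obtain k a b where x: "x = e k a b" "a < 2 ^ k" "b < 2 ^ k" unfolding F2g_def by blast
  show ?thesis unfolding eventually_sequentially
    by (rule exI[of _ k]) (use e_refine x in auto)
qed

lemma cspan_F2g_eventually: "x \<in> cspan F2g \<Longrightarrow> eventually (\<lambda>n. x \<in> A n) sequentially"
  by (rule cspan_eventually[OF subsp_A F2g_eventually])

lemma F2g_mult: "x \<in> cspan F2g \<Longrightarrow> y \<in> cspan F2g \<Longrightarrow> x * y \<in> cspan F2g"
proof (rule cspan_mult_closed)
  fix x y assume "x \<in> F2g" "y \<in> F2g"
  then have "eventually (\<lambda>n. x \<in> A n \<and> y \<in> A n) sequentially"
    using F2g_eventually eventually_conj by blast
  then obtain n where "x \<in> A n" "y \<in> A n" using eventually_sequentially by auto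
  then show "x * y \<in> cspan F2g" using A_mult A_sub_F2g by blast
qed

lemma F2g_cadj: "x \<in> cspan F2g \<Longrightarrow> cadj x \<in> cspan F2g"
proof (rule cspan_cadj_closed)
  fix x assume "x \<in> F2g"
  then obtain k a b where x: "x = e k a b" "a < 2 ^ k" "b < 2 ^ k" unfolding F2g_def by blast
  have "e k b a \<in> F2g" unfolding F2g_def using x by blast
  then show "cadj x \<in> cspan F2g" unfolding x cadj_e using cspan_superset by blast
qed

lemma cstar_F2: "cstar_subalgebra (F2 u s)"
  unfolding F2_eq by (rule cstar_subalgebra_clspan[OF F2g_mult F2g_cadj])

lemma subsp_W: "subsp (W n)" unfolding W_def by (rule subsp_cspan)

lemma G_in_W: "G m n k \<in> W n"
proof -
  have "G m n k \<in> {G m n k | m k. True}" by auto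
  then show ?thesis unfolding W_def by (rule subsetD[OF cspan_superset])
qed

lemma W_mult: "x \<in> W n \<Longrightarrow> y \<in> W n \<Longrightarrow> x * y \<in> W n"
  unfolding W_def
proof (rule cspan_mult_closed)
  fix x y assume "x \<in> {G m n k | m k. True}" "y \<in> {G m n k | m k. True}"
  then obtain a b c d where x: "x = G a n b" and y: "y = G c n d" by blast
  show "x * y \<in> cspan {G m n k | m k. True}"
    using G_in_W[of "a + b + c" n d] subspD(1)[OF subsp_W] unfolding W_def x y G_mult by simp
qed

lemma G_refine: "k \<le> n \<Longrightarrow> G m k j \<in> W n"
proof (induction "n - k" arbitrary: k m j)
  case 0 then show ?case using G_in_W by simp
next
  case (Suc d)
  then have kn: "Suc k \<le> n" "d = n - Suc k" by auto
  show ?case unfolding G_step[of m k j]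
    by (rule subspD(2)[OF subsp_W]) (use Suc.hyps(1)[OF kn(2) kn(1)] in auto)
qed

lemma W_sub_B2g: "W n \<subseteq> cspan B2g"
  unfolding W_def B2g_def by (rule cspan_mono) blast

lemma B2g_eventually: "x \<in> B2g \<Longrightarrow> eventually (\<lambda>n. x \<in> W n) sequentially"
proof -
  assume "x \<in> B2g"
  then obtain m k j where x: "x = G m k j" unfolding B2g_def by blast
  show ?thesis unfolding eventually_sequentially
    by (rule exI[of _ k]) (use G_refine x in auto)
qed

lemma B2g_mult: "x \<in> cspan B2g \<Longrightarrow> y \<in> cspan B2g \<Longrightarrow> x * y \<in> cspan B2g"
proof (rule cspan_mult_closed)
  fix x y assume "x \<in> B2g" "y \<in> B2g"
  then have "eventually (\<lambda>n. x \<in> W n \<and> y \<in> W n) sequentially"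
    using B2g_eventually eventually_conj by blast
  then obtain n where "x \<in> W n" "y \<in> W n" using eventually_sequentially by auto
  then show "x * y \<in> cspan B2g" using W_mult W_sub_B2g by blast
qed

lemma B2g_cadj: "x \<in> cspan B2g \<Longrightarrow> cadj x \<in> cspan B2g"
proof (rule cspan_cadj_closed)
  fix x assume "x \<in> B2g"
  then obtain m k j where x: "x = G m k j" unfolding B2g_def by blast
  have "G (- j) k (- m) \<in> B2g" unfolding B2g_def by blast
  then show "cadj x \<in> cspan B2g" unfolding x cadj_G using cspan_superset by blast
qed

lemma cstar_B2: "cstar_subalgebra (B2 u s)"
  unfolding B2_eq by (rule cstar_subalgebra_clspan[OF B2g_mult B2g_cadj])

lemma F2g_sub_B2g: "F2g \<subseteq> B2g"
  unfolding F2g_def B2g_def e_def by blast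

lemma F2_sub_B2: "F2 u s \<subseteq> B2 u s"
  unfolding F2_eq B2_eq clspan_def by (intro closure_mono cspan_mono F2g_sub_B2g)

lemma u_in_B2: "u \<in> B2 u s"
proof -
  have "G 1 0 0 \<in> B2g" unfolding B2g_def by blast
  moreover have "G 1 0 0 = u" by (simp add: G_def P0)
  ultimately have "u \<in> cspan B2g" using cspan_superset[of B2g] by auto
  then show ?thesis unfolding B2_eq clspan_def using closure_subset by blast
qed

end


lemma continuous_scaleC_one: "continuous_on UNIV (\<lambda>c. scaleC c (1::'a::cstar_algebra))"
  unfolding continuous_on_iff
proof (intro ballI allI impI)
  fix x :: complex and e :: real assume "e > 0"
  show "\<exists>d>0. \<forall>x'\<in>UNIV. dist x' x < d \<longrightarrow> dist (scaleC x' (1::'a)) (scaleC x 1) < e"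
  proof (intro exI[of _ e] conjI ballI impI)
    fix x' assume "dist x' x < e"
    moreover have "dist (scaleC x' (1::'a)) (scaleC x 1) = dist x' x"
      by (simp add: dist_norm norm_scaleC flip: scaleC_diff_left)
    ultimately show "dist (scaleC x' (1::'a)) (scaleC x 1) < e" by simp
  qed (use \<open>e > 0\<close> in auto)
qed

lemma norm_scaleC_one: "norm (scaleC c (1::'a::cstar_algebra)) = cmod c"
  by (simp add: norm_scaleC)

lemma scalar_closed:
  assumes "\<And>e. e > 0 \<Longrightarrow> \<exists>c. norm (x - scaleC c 1) < e" "norm x \<le> 1"
  shows "\<exists>c. x = scaleC c (1::'a::cstar_algebra)"
proof -
  define L where "L = (\<lambda>c. scaleC c (1::'a)) ` cball 0 2"
  have "compact L" unfolding L_def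
    by (rule compact_continuous_image[OF continuous_on_subset[OF continuous_scaleC_one]]) auto
  then have cl: "closed L" by (rule compact_imp_closed)
  have "x \<in> closure L" unfolding closure_approachable
  proof (intro allI impI)
    fix e :: real assume "e > 0"
    then obtain c where c: "norm (x - scaleC c 1) < min e 1" using assms(1)[of "min e 1"] by auto
    have "cmod c = norm (scaleC c (1::'a))" by (simp add: norm_scaleC_one)
    also have "\<dots> \<le> norm x + norm (x - scaleC c 1)" by (metis norm_triangle_sub norm_minus_commute)
    also have "\<dots> \<le> 2" using c assms(2) by simp
    finally have "scaleC c 1 \<in> L" unfolding L_def by auto
    moreover have "dist (scaleC c 1) x < e" using c by (simp add: dist_norm norm_minus_commute)
    ultimately show "\<exists>y\<in>L. dist y x < e" by blast
  qed
  then have "x \<in> L" using cl by (simp add: closure_closed)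
  then show ?thesis unfolding L_def by auto
qed

lemma norm_sandwich:
  assumes "norm a \<le> 1" "norm c \<le> 1"
  shows "norm (a * b * (c::'a::cstar_algebra)) \<le> norm b"
proof -
  have "norm (a * b * c) \<le> norm (a * b) * norm c" by (rule norm_mult_ineq)
  also have "\<dots> \<le> norm (a * b)" using assms(2) by (simp add: mult_left_le)
  also have "\<dots> \<le> norm a * norm b" by (rule norm_mult_ineq)
  also have "\<dots> \<le> norm b" using assms(1) by (simp add: mult_left_le_one_le)
  finally show ?thesis .
qed

context q2 begin

lemma one_neq_zero: "(1::'a) \<noteq> 0" by simp

lemma u_not_scalar: "u \<noteq> scaleC c 1"
proof
  assume u: "u = scaleC c 1"
  have "s * u = scaleC c s" unfolding u by (simp add: scaleC_mult_right')
  moreover have "u ^ 2 * s = scaleC (c * c) s"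
    unfolding u by (simp add: power2_eq_square scaleC_mult_left' scaleC_scaleC)
  ultimately have "scaleC c s = scaleC (c * c) s" using su by simp
  then have "scaleC (c - c * c) s = 0" by (simp add: scaleC_diff_left)
  then have "cmod (c - c * c) * norm s = 0" by (metis norm_scaleC norm_zero)
  moreover have "s \<noteq> 0" using ss1 by auto
  ultimately have "c - c * c = 0" by simp
  then have "c = 0 \<or> c = 1" by (metis eq_iff_diff_eq_0 mult_cancel_left1 mult.commute)
  then show False
  proof
    assume "c = 0" then have "u = 0" using u by simp
    then show False using uu1 by simp
  next
    assume "c = 1" then have u1: "u = 1" using u by simp
    define p where "p = s * cadj s"
    have pp: "p * p = p" unfolding p_def by (simp add: mult.assoc flip: mult.assoc[of "cadj s"] add: ss1)
    have "p + p = 1" using rel2 unfolding p_def u1 by simp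
    then have "p * (p + p) = p" by simp
    then have "p + p = p" by (simp add: distrib_left pp)
    then have "p = 0" by simp
    then show False using \<open>p + p = 1\<close> by simp
  qed
qed

lemma corner_scalar: "z \<in> A n \<Longrightarrow> \<exists>c. P n * z * P n = scaleC c (P n)"
proof -
  have "A n \<subseteq> {z. \<exists>c. P n * z * P n = scaleC c (P n)}" unfolding A_def
  proof (rule cspan_least)
    show "subsp {z. \<exists>c. P n * z * P n = scaleC c (P n)}" unfolding subsp_def
    proof (intro conjI ballI allI)
      show "0 \<in> {z. \<exists>c. P n * z * P n = scaleC c (P n)}" by (auto intro: exI[of _ 0])
    next
      fix x y assume "x \<in> {z. \<exists>c. P n * z * P n = scaleC c (P n)}" "y \<in> {z. \<exists>c. P n * z * P n = scaleC c (P n)}"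
      then obtain c d where "P n * x * P n = scaleC c (P n)" "P n * y * P n = scaleC d (P n)" by auto
      then show "x + y \<in> {z. \<exists>c. P n * z * P n = scaleC c (P n)}"
        by (auto simp: distrib_left distrib_right scaleC_add_left intro: exI[of _ "c + d"])
    next
      fix a x assume "x \<in> {z. \<exists>c. P n * z * P n = scaleC c (P n)}"
      then obtain c where "P n * x * P n = scaleC c (P n)" by auto
      then show "scaleC a x \<in> {z. \<exists>c. P n * z * P n = scaleC c (P n)}"
        by (auto simp: scaleC_mult_right' scaleC_mult_left' scaleC_scaleC intro: exI[of _ "a * c"])
    qed
  next
    show "Fgen n \<subseteq> {z. \<exists>c. P n * z * P n = scaleC c (P n)}"
    proof
      fix z assume "z \<in> Fgen n"
      then obtain a b where z: "z = e n a b" "a < 2 ^ n" "b < 2 ^ n" unfolding Fgen_def by blast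
      have "P n * z * P n = (if a = 0 \<and> b = 0 then P n else 0)"
        unfolding z(1) e_00[symmetric] using z(2,3) by (simp add: e_mult)
      then show "z \<in> {z. \<exists>c. P n * z * P n = scaleC c (P n)}"
        by (auto intro: exI[of _ 1] exI[of _ 0])
    qed
  qed
  then show "z \<in> A n \<Longrightarrow> ?thesis" by auto
qed

lemma corner_scalar': "z \<in> A n \<Longrightarrow> P n * z = z \<Longrightarrow> z * P n = z \<Longrightarrow> \<exists>c. z = scaleC c (P n)"
  using corner_scalar[of z n] by (simp add: mult.assoc)

lemma P_in_A: "P n \<in> A n" using e_in_A[of 0 n 0] by (simp add: e_00)

lemma norm_compress: "norm X \<le> norm (s ^ n * X * cadj (s ^ n))"
proof -
  have "X = cadj (s ^ n) * (s ^ n * X * cadj (s ^ n)) * s ^ n"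
    by (simp add: mult.assoc iso_pow flip: mult.assoc[of "cadj (s^n)" "s^n"])
  then have "norm X = norm (cadj (s ^ n) * (s ^ n * X * cadj (s ^ n)) * s ^ n)" by (rule arg_cong)
  also have "\<dots> \<le> norm (s ^ n * X * cadj (s ^ n))"
    by (rule norm_sandwich) (use norm_spow[of n] in simp_all)
  finally show ?thesis .
qed

lemma uN_P: "upow u (2 ^ n) * P n = s ^ n * u * cadj (s ^ n)"
  using spow_upow[of n 1] by (simp add: P_def mult.assoc)

lemma u_e_last: "u * e n (2 ^ n - 1) 0 = upow u (2 ^ n) * P n"
proof -
  have "u * e n (2 ^ n - 1) 0 = G (1 + int (2 ^ n - 1)) n 0"
    unfolding e_def using upow_G[of 1] by simp
  also have "1 + int (2 ^ n - 1) = 2 ^ n" by (simp add: of_nat_diff)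
  finally show ?thesis by (simp add: G_def)
qed

lemma dist_scalar: "y \<in> A n \<Longrightarrow> \<exists>c. norm (u - scaleC c 1) \<le> norm (u - y)"
proof -
  assume y: "y \<in> A n"
  have eA: "e n (2 ^ n - 1) 0 \<in> A n" by (rule e_in_A) auto
  have z: "P n * y * e n (2 ^ n - 1) 0 \<in> A n" using A_mult[OF A_mult[OF P_in_A y] eA] .
  obtain c where c: "P n * (P n * y * e n (2 ^ n - 1) 0) * P n = scaleC c (P n)"
    using corner_scalar[OF z] by auto
  have "e n (2 ^ n - 1) 0 * P n = e n (2 ^ n - 1) 0"
    unfolding e_00[symmetric] by (subst e_mult) auto
  then have c': "P n * y * e n (2 ^ n - 1) 0 = scaleC c (P n)"
    using c by (simp add: mult.assoc P_idem flip: mult.assoc[of "P n" "P n"])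
  have "P n * u * e n (2 ^ n - 1) 0 = P n * upow u (2 ^ n) * P n"
    by (simp only: mult.assoc u_e_last)
  also have "\<dots> = upow u (2 ^ n) * P n" using P_upow_P[of n "2 ^ n"] by simp
  finally have "P n * u * e n (2 ^ n - 1) 0 = upow u (2 ^ n) * P n" .
  then have "P n * (u - y) * e n (2 ^ n - 1) 0 = upow u (2 ^ n) * P n - scaleC c (P n)"
    using c' by (simp add: algebra_simps)
  also have "\<dots> = s ^ n * u * cadj (s ^ n) - scaleC c (s ^ n * cadj (s ^ n))"
    by (simp only: uN_P) (simp only: P_def)
  also have "\<dots> = s ^ n * (u - scaleC c 1) * cadj (s ^ n)"
    by (simp add: algebra_simps scaleC_mult_right' scaleC_mult_left')
  finally have eq: "P n * (u - y) * e n (2 ^ n - 1) 0 = s ^ n * (u - scaleC c 1) * cadj (s ^ n)" .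
  have "norm (u - scaleC c 1) \<le> norm (P n * (u - y) * e n (2 ^ n - 1) 0)"
    unfolding eq by (rule norm_compress)
  also have "\<dots> \<le> norm (u - y)" using norm_sandwich norm_P norm_e by blast
  finally show ?thesis by blast
qed

lemma u_notin_F2: "u \<notin> F2 u s"
proof
  assume "u \<in> F2 u s"
  have "\<exists>c. norm (u - scaleC c 1) < e" if epos: "e > 0" for e
  proof -
    obtain y where y: "y \<in> cspan F2g" "norm (u - y) < e"
      using clspan_approx[OF \<open>u \<in> F2 u s\<close>[unfolded F2_eq] epos] by blast
    obtain n where "y \<in> A n" using cspan_F2g_eventually[OF y(1)] eventually_sequentially by auto
    then obtain c where "norm (u - scaleC c 1) \<le> norm (u - y)" using dist_scalar by blast
    then show ?thesis using y(2) by (intro exI[of _ c]) simp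
  qed
  then obtain c where "u = scaleC c 1" using scalar_closed[OF _ norm_u] by blast
  then show False using u_not_scalar by blast
qed

end


lemma pow_trick:
  fixes x \<theta> K :: real
  assumes "0 \<le> \<theta>" "0 \<le> x" "\<And>k. x ^ (2 ^ Suc k) \<le> K * \<theta> ^ (2 ^ Suc k)"
  shows "x \<le> \<theta>"
proof (rule ccontr)
  assume "\<not> x \<le> \<theta>" then have xt: "\<theta> < x" by simp
  show False
  proof (cases "\<theta> = 0")
    case True
    then have "x ^ 2 \<le> 0" using assms(3)[of 0] by simp
    moreover have "x ^ 2 > 0" using xt True by simp
    ultimately show False by simp
  next
    case False
    then have tp: "\<theta> > 0" using assms(1) by simp
    define y where "y = x / \<theta>"
    have y1: "y > 1" using xt tp by (simp add: y_def)
    obtain k :: nat where k: "K / (y - 1) < real k" using reals_Archimedean2 by blast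
    define m :: nat where "m = 2 ^ Suc k"
    have "1 + real m * (y - 1) \<le> (1 + (y - 1)) ^ m" using y1 by (intro Bernoulli_inequality) simp
    then have B: "1 + real m * (y - 1) \<le> y ^ m" by simp
    have "x ^ m \<le> K * \<theta> ^ m" using assms(3)[of k] unfolding m_def .
    then have yK: "y ^ m \<le> K" using tp by (simp add: y_def power_divide divide_le_eq)
    have "k < m" unfolding m_def using less_exp[of "Suc k"] by simp
    then have "real k * (y - 1) < real m * (y - 1)" using y1 by simp
    moreover have "K < real k * (y - 1)" using k y1 by (simp add: divide_less_eq)
    ultimately show False using B yK by linarith
  qed
qed

context q2 begin

definition bnd :: "nat \<Rightarrow> 'a \<Rightarrow> real \<Rightarrow> bool" where
  "bnd n X \<theta> \<longleftrightarrow> (\<forall>r t. r \<in> A n \<longrightarrow> P n * r = r \<longrightarrow> norm r \<le> 1 \<longrightarrow> t \<in> A n \<longrightarrow> t * P n = t \<longrightarrow>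
      norm t \<le> 1 \<longrightarrow> norm (r * X * t) \<le> \<theta>)"

lemma bndD: "bnd n X \<theta> \<Longrightarrow> r \<in> A n \<Longrightarrow> P n * r = r \<Longrightarrow> norm r \<le> 1 \<Longrightarrow> t \<in> A n \<Longrightarrow> t * P n = t \<Longrightarrow>
      norm t \<le> 1 \<Longrightarrow> norm (r * X * t) \<le> \<theta>"
  unfolding bnd_def by blast

lemma bnd_nonneg: "bnd n X \<theta> \<Longrightarrow> 0 \<le> \<theta>"
  using bndD[of n X \<theta> 0 0] subspD(1)[OF subsp_A] by simp

lemma one_in_A: "1 \<in> A n"
  unfolding sum_diag_e[of n, symmetric] by (rule subsp_sum[OF subsp_A]) (auto intro: e_in_A)

lemma pow_in_A: "X \<in> A n \<Longrightarrow> X ^ m \<in> A n"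
  by (induction m) (auto simp: one_in_A A_mult)

lemma norm_normalize: "z \<noteq> 0 \<Longrightarrow> norm (scaleC (complex_of_real (1 / norm z)) (z::'a)) = 1"
  by (simp add: norm_scaleC norm_divide)

lemma bnd_row:
  assumes X: "X \<in> A n" and b: "bnd n X \<alpha>" and r: "r \<in> A n" "P n * r = r"
  shows "norm (r * X) \<le> \<alpha> * norm r"
proof (cases "r * X = 0")
  case True then show ?thesis using bnd_nonneg[OF b] by simp
next
  case False
  define \<rho> where "\<rho> = r * X"
  have r0: "r \<noteq> 0" using False by auto
  have \<rho>0: "\<rho> \<noteq> 0" using False by (simp add: \<rho>_def)
  define a where "a = complex_of_real (1 / norm r)"
  define c where "c = complex_of_real (1 / norm \<rho>)"
  have "scaleC a r \<in> A n" using subspD(3)[OF subsp_A r(1)] .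
  moreover have "P n * scaleC a r = scaleC a r" using r(2) by (simp add: scaleC_mult_right')
  moreover have "norm (scaleC a r) \<le> 1" unfolding a_def using norm_normalize[OF r0] by simp
  moreover have "cadj \<rho> \<in> A n" unfolding \<rho>_def cadj_mult using A_mult[OF A_cadj[OF X] A_cadj[OF r(1)]] .
  then have "scaleC c (cadj \<rho>) \<in> A n" by (rule subspD(3)[OF subsp_A])
  moreover have "scaleC c (cadj \<rho>) * P n = scaleC c (cadj \<rho>)"
  proof -
    have "cadj \<rho> * P n = cadj (P n * \<rho>)" by (simp add: cadj_mult cadj_P)
    also have "P n * \<rho> = \<rho>" unfolding \<rho>_def using r(2) by (simp flip: mult.assoc)
    finally show ?thesis by (simp add: scaleC_mult_left')
  qed
  moreover have "norm (scaleC c (cadj \<rho>)) \<le> 1" unfolding c_def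
    using \<rho>0 by (simp add: norm_scaleC norm_divide)
  ultimately have le: "norm (scaleC a r * X * scaleC c (cadj \<rho>)) \<le> \<alpha>" using bndD[OF b] by blast
  have "scaleC a r * X * scaleC c (cadj \<rho>) = scaleC (a * c) (\<rho> * cadj \<rho>)"
    unfolding \<rho>_def by (simp add: scaleC_mult_left' scaleC_mult_right' scaleC_scaleC mult.commute)
  then have "norm (scaleC a r * X * scaleC c (cadj \<rho>)) = norm \<rho> / norm r"
    using r0 \<rho>0 by (simp add: norm_scaleC cstar_identity' a_def c_def norm_mult norm_divide power2_eq_square field_simps)
  then have "norm \<rho> / norm r \<le> \<alpha>" using le by simp
  then show ?thesis using r0 by (simp add: \<rho>_def divide_le_eq mult.commute)
qed

lemma bnd_cadj: "bnd n X \<alpha> \<Longrightarrow> bnd n (cadj X) \<alpha>"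
  unfolding bnd_def
proof (intro allI impI)
  fix r t assume b: "\<forall>r t. r \<in> A n \<longrightarrow> P n * r = r \<longrightarrow> norm r \<le> 1 \<longrightarrow> t \<in> A n \<longrightarrow> t * P n = t \<longrightarrow>
      norm t \<le> 1 \<longrightarrow> norm (r * X * t) \<le> \<alpha>"
    and r: "r \<in> A n" "P n * r = r" "norm r \<le> 1" and t: "t \<in> A n" "t * P n = t" "norm t \<le> 1"
  have "norm (r * cadj X * t) = norm (cadj t * X * cadj r)"
    by (metis cadj_cadj cadj_mult mult.assoc norm_cadj)
  also have "\<dots> \<le> \<alpha>"
  proof (rule b[rule_format])
    show "cadj t \<in> A n" "cadj r \<in> A n" using A_cadj r t by auto
    show "P n * cadj t = cadj t" using t(2) by (metis cadj_P cadj_mult)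
    show "cadj r * P n = cadj r" using r(2) by (metis cadj_P cadj_mult)
  qed (use r t in auto)
  finally show "norm (r * cadj X * t) \<le> \<alpha>" .
qed

lemma bnd_col:
  assumes X: "X \<in> A n" and b: "bnd n X \<alpha>" and t: "t \<in> A n" "t * P n = t"
  shows "norm (X * t) \<le> \<alpha> * norm t"
proof -
  have "norm (cadj t * cadj X) \<le> \<alpha> * norm (cadj t)"
  proof (rule bnd_row[OF A_cadj[OF X] bnd_cadj[OF b] A_cadj[OF t(1)]])
    show "P n * cadj t = cadj t" using t(2) by (metis cadj_P cadj_mult)
  qed
  then show ?thesis by (metis cadj_mult norm_cadj)
qed

lemma bnd_mult:
  assumes X: "X \<in> A n" "bnd n X \<alpha>" and Y: "Y \<in> A n" "bnd n Y \<beta>"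
  shows "bnd n (X * Y) (\<alpha> * \<beta>)"
  unfolding bnd_def
proof (intro allI impI)
  fix r t assume r: "r \<in> A n" "P n * r = r" "norm r \<le> 1" and t: "t \<in> A n" "t * P n = t" "norm t \<le> 1"
  have a0: "0 \<le> \<alpha>" "0 \<le> \<beta>" using bnd_nonneg X(2) Y(2) by auto
  have "norm (r * (X * Y) * t) \<le> norm (r * X) * norm (Y * t)"
    by (metis mult.assoc norm_mult_ineq)
  also have "\<dots> \<le> (\<alpha> * norm r) * (\<beta> * norm t)"
    by (rule mult_mono[OF bnd_row[OF X r(1,2)] bnd_col[OF Y t(1,2)]]) (use a0 in auto)
  also have "\<dots> \<le> \<alpha> * \<beta>"
  proof -
    have "\<alpha> * norm r \<le> \<alpha>" "\<beta> * norm t \<le> \<beta>" using a0 r(3) t(3) by (auto simp: mult_left_le)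
    then show ?thesis using a0 by (intro mult_mono) auto
  qed
  finally show "norm (r * (X * Y) * t) \<le> \<alpha> * \<beta>" .
qed

lemma e_row: "P n * e n 0 a = e n 0 a" if "a < 2 ^ n"
  using that by (simp add: e_00[symmetric] e_mult)

lemma e_col: "e n a 0 * P n = e n a 0" if "a < 2 ^ n"
  using that by (simp add: e_00[symmetric] e_mult)

lemma bnd_norm:
  assumes b: "bnd n X \<alpha>"
  shows "norm X \<le> real ((2 ^ n) * (2 ^ n)) * \<alpha>"
proof -
  have "X = (\<Sum>a<2 ^ n. e n a a) * X * (\<Sum>b<2 ^ n. e n b b)" by (simp add: sum_diag_e)
  also have "\<dots> = (\<Sum>a<2 ^ n. \<Sum>b<2 ^ n. e n a a * X * e n b b)"
    by (simp add: sum_distrib_left sum_distrib_right, rule sum.swap)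
  finally have eq: "X = (\<Sum>a<2 ^ n. \<Sum>b<2 ^ n. e n a a * X * e n b b)" .
  have t: "norm (e n a a * X * e n b b) \<le> \<alpha>" if ab: "a < 2 ^ n" "b < 2 ^ n" for a b
  proof -
    have "e n a a * X * e n b b = e n a 0 * (e n 0 a * X * e n b 0) * e n 0 b"
      using ab by (simp add: mult.assoc e_mult flip: mult.assoc[of "e n a 0"])
    then have "norm (e n a a * X * e n b b) \<le> norm (e n 0 a * X * e n b 0)"
      using norm_sandwich[OF norm_e norm_e] by simp
    also have "\<dots> \<le> \<alpha>"
      by (rule bndD[OF b]) (use ab in \<open>auto intro: e_in_A e_row e_col norm_e\<close>)
    finally show ?thesis .
  qed
  have "norm X \<le> (\<Sum>a<2 ^ n. \<Sum>b<2 ^ n. norm (e n a a * X * e n b b))"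
    by (subst eq) (rule order_trans[OF norm_sum sum_mono[OF norm_sum]])
  also have "\<dots> \<le> (\<Sum>a<(2::nat) ^ n. \<Sum>b<(2::nat) ^ n. \<alpha>)"
    by (intro sum_mono t) auto
  also have "\<dots> = real ((2 ^ n) * (2 ^ n)) * \<alpha>" by simp
  finally show ?thesis .
qed

lemma selfadj_pow_norm: "cadj h = h \<Longrightarrow> norm (h ^ (2 ^ k)) = norm h ^ (2 ^ k)"
proof (induction k)
  case 0 then show ?case by simp
next
  case (Suc k)
  have "h ^ (2 ^ Suc k) = cadj (h ^ (2 ^ k)) * h ^ (2 ^ k)"
    using Suc.prems by (simp add: cadj_power flip: power_add mult_2)
  then have "norm (h ^ (2 ^ Suc k)) = (norm (h ^ (2 ^ k)))^2" by (simp add: cstar_identity)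
  also have "\<dots> = norm h ^ (2 ^ Suc k)" using Suc by (simp add: power_mult[symmetric] mult.commute)
  finally show ?case .
qed

lemma rows_lemma:
  assumes X: "X \<in> A n" and b: "bnd n X \<theta>"
  shows "norm X \<le> \<theta>"
proof -
  define h where "h = cadj X * X"
  have hA: "h \<in> A n" unfolding h_def using A_mult[OF A_cadj[OF X] X] .
  have hb: "bnd n h (\<theta> * \<theta>)" unfolding h_def using bnd_mult[OF A_cadj[OF X] bnd_cadj[OF b] X b] .
  have hk: "bnd n (h ^ (2 ^ k)) ((\<theta> * \<theta>) ^ (2 ^ k))" for k
  proof (induction k)
    case 0 then show ?case using hb by simp
  next
    case (Suc k)
    have "bnd n (h ^ (2 ^ k) * h ^ (2 ^ k)) ((\<theta> * \<theta>) ^ (2 ^ k) * (\<theta> * \<theta>) ^ (2 ^ k))"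
      by (rule bnd_mult[OF pow_in_A[OF hA] Suc pow_in_A[OF hA] Suc])
    then show ?case by (simp flip: power_add mult_2)
  qed
  have hs: "cadj h = h" unfolding h_def by (simp add: cadj_mult cadj_cadj)
  show ?thesis
  proof (rule pow_trick[where K="real ((2 ^ n) * (2 ^ n))"])
    show "0 \<le> \<theta>" using bnd_nonneg[OF b] .
    show "0 \<le> norm X" by simp
    fix k
    have "norm X ^ (2 ^ Suc k) = (norm X ^ 2) ^ (2 ^ k)" by (simp add: power_mult[symmetric])
    also have "\<dots> = norm h ^ (2 ^ k)" unfolding h_def by (simp add: cstar_identity)
    also have "\<dots> = norm (h ^ (2 ^ k))" using selfadj_pow_norm[OF hs] by simp
    also have "\<dots> \<le> real ((2 ^ n) * (2 ^ n)) * ((\<theta> * \<theta>) ^ (2 ^ k))" by (rule bnd_norm[OF hk])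
    also have "(\<theta> * \<theta>) ^ (2 ^ k) = \<theta> ^ (2 ^ Suc k)" by (simp add: power_mult power2_eq_square)
    finally show "norm X ^ (2 ^ Suc k) \<le> real ((2 ^ n) * (2 ^ n)) * \<theta> ^ (2 ^ Suc k)" .
  qed
qed

end


context q2 begin

definition proj :: "nat \<Rightarrow> nat set \<Rightarrow> 'a" where "proj n I = (\<Sum>c\<in>I \<inter> {..<2 ^ n}. e n c c)"

definition PB :: "nat \<Rightarrow> 'a" where "PB n = proj n {a. 4 * a < 2 ^ n}"
definition QB :: "nat \<Rightarrow> 'a" where "QB n = proj n {a. 3 * 2 ^ n \<le> 4 * a}"

lemma proj_in_A: "proj n I \<in> A n"
  unfolding proj_def by (rule subsp_sum[OF subsp_A]) (auto intro: e_in_A)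

lemma proj_e_left: "a < 2 ^ n \<Longrightarrow> b < 2 ^ n \<Longrightarrow> proj n I * e n a b = (if a \<in> I then e n a b else 0)"
proof -
  assume ab: "a < 2 ^ n" "b < 2 ^ n"
  have "proj n I * e n a b = (\<Sum>c\<in>I \<inter> {..<2 ^ n}. e n c c * e n a b)"
    unfolding proj_def by (rule sum_distrib_right)
  also have "\<dots> = (\<Sum>c\<in>I \<inter> {..<2 ^ n}. if c = a then e n c b else 0)"
    by (rule sum.cong[OF refl]) (use ab in \<open>simp add: e_mult\<close>)
  also have "\<dots> = (if a \<in> I then e n a b else 0)" using ab by simp
  finally show ?thesis .
qed

lemma proj_e_right: "a < 2 ^ n \<Longrightarrow> b < 2 ^ n \<Longrightarrow> e n a b * proj n I = (if b \<in> I then e n a b else 0)"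
proof -
  assume ab: "a < 2 ^ n" "b < 2 ^ n"
  have "e n a b * proj n I = (\<Sum>c\<in>I \<inter> {..<2 ^ n}. e n a b * e n c c)"
    unfolding proj_def by (rule sum_distrib_left)
  also have "\<dots> = (\<Sum>c\<in>I \<inter> {..<2 ^ n}. if b = c then e n a c else 0)"
    by (rule sum.cong[OF refl]) (use ab in \<open>simp add: e_mult\<close>)
  also have "\<dots> = (if b \<in> I then e n a b else 0)" using ab by simp
  finally show ?thesis .
qed

lemma cadj_proj: "cadj (proj n I) = proj n I"
  unfolding proj_def by (simp add: cadj_sum cadj_e)

lemma proj_idem: "proj n I * proj n I = proj n I"
proof -
  have "proj n I * proj n I = (\<Sum>c\<in>I \<inter> {..<2 ^ n}. proj n I * e n c c)"
    unfolding proj_def[of n I] by (rule sum_distrib_left)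
  also have "\<dots> = (\<Sum>c\<in>I \<inter> {..<2 ^ n}. e n c c)"
    by (rule sum.cong[OF refl]) (simp add: proj_e_left)
  finally show ?thesis unfolding proj_def .
qed

lemma norm_proj: "norm (proj n I) \<le> 1"
  by (rule norm_proj_le1[OF cadj_proj proj_idem])

lemma A_comm: "z \<in> A n \<Longrightarrow> upow u (2 ^ n * t) * z = z * upow u (2 ^ n * t)"
proof -
  have "A n \<subseteq> {z. upow u (2 ^ n * t) * z = z * upow u (2 ^ n * t)}" unfolding A_def
  proof (rule cspan_least)
    show "subsp {z. upow u (2 ^ n * t) * z = z * upow u (2 ^ n * t)}"
      by (simp add: subsp_def distrib_left distrib_right scaleC_mult_right' scaleC_mult_left')
    show "Fgen n \<subseteq> {z. upow u (2 ^ n * t) * z = z * upow u (2 ^ n * t)}"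
      unfolding Fgen_def e_def using G_comm by auto
  qed
  then show "z \<in> A n \<Longrightarrow> ?thesis" by auto
qed

definition V :: "nat \<Rightarrow> 'a set" where
  "V n = {y. \<exists>y0 M1 M2. y0 \<in> A n \<and> M1 \<in> A n \<and> M2 \<in> A n \<and>
      y = y0 + upow u (2 ^ n) * M1 + upow u (- (2 ^ n)) * M2 \<and>
      PB n * y0 * QB n = 0 \<and> QB n * y0 * PB n = 0 \<and>
      PB n * M1 * QB n = M1 \<and> QB n * M1 * PB n = 0 \<and>
      PB n * M2 * QB n = 0 \<and> QB n * M2 * PB n = M2}"

lemma subsp_V: "subsp (V n)"
  unfolding subsp_def
proof (intro conjI ballI allI)
  show "0 \<in> V n" unfolding V_def
    by (intro CollectI exI[of _ 0] conjI) (simp_all add: subspD(1)[OF subsp_A])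
next
  fix x y assume "x \<in> V n" "y \<in> V n"
  then obtain x0 X1 X2 y0 Y1 Y2 where
    x: "x0 \<in> A n" "X1 \<in> A n" "X2 \<in> A n" "x = x0 + upow u (2 ^ n) * X1 + upow u (- (2 ^ n)) * X2"
      "PB n * x0 * QB n = 0" "QB n * x0 * PB n = 0" "PB n * X1 * QB n = X1" "QB n * X1 * PB n = 0"
      "PB n * X2 * QB n = 0" "QB n * X2 * PB n = X2" and
    y: "y0 \<in> A n" "Y1 \<in> A n" "Y2 \<in> A n" "y = y0 + upow u (2 ^ n) * Y1 + upow u (- (2 ^ n)) * Y2"
      "PB n * y0 * QB n = 0" "QB n * y0 * PB n = 0" "PB n * Y1 * QB n = Y1" "QB n * Y1 * PB n = 0"
      "PB n * Y2 * QB n = 0" "QB n * Y2 * PB n = Y2"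
    unfolding V_def by blast
  show "x + y \<in> V n" unfolding V_def
    apply (rule CollectI, rule exI[of _ "x0 + y0"], rule exI[of _ "X1 + Y1"], rule exI[of _ "X2 + Y2"], intro conjI)
    using x y subspD(2)[OF subsp_A] by (simp_all add: distrib_left distrib_right algebra_simps)
next
  fix c x assume "x \<in> V n"
  then obtain x0 X1 X2 where
    x: "x0 \<in> A n" "X1 \<in> A n" "X2 \<in> A n" "x = x0 + upow u (2 ^ n) * X1 + upow u (- (2 ^ n)) * X2"
      "PB n * x0 * QB n = 0" "QB n * x0 * PB n = 0" "PB n * X1 * QB n = X1" "QB n * X1 * PB n = 0"
      "PB n * X2 * QB n = 0" "QB n * X2 * PB n = X2"
    unfolding V_def by blast
  show "scaleC c x \<in> V n" unfolding V_def
    apply (rule CollectI, rule exI[of _ "scaleC c x0"], rule exI[of _ "scaleC c X1"], rule exI[of _ "scaleC c X2"], intro conjI)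
    using x subspD(3)[OF subsp_A] by (simp_all add: scaleC_add_right scaleC_mult_right' scaleC_mult_left')
qed

lemma G_decomp: "\<exists>a b t. a < 2 ^ n \<and> b < 2 ^ n \<and> G m n j = e n a b * upow u (2 ^ n * t) \<and>
    int a - int b + 2 ^ n * t = m + j"
proof -
  define N :: int where "N = 2 ^ n"
  have Np: "N > 0" unfolding N_def by simp
  define a' where "a' = m mod N"
  define q1 where "q1 = m div N"
  have m: "m = a' + N * q1" unfolding a'_def q1_def by simp
  define j' where "j' = j + N * q1"
  have G1: "G m n j = G a' n j'"
    using G_shift[of m n j "- q1"] unfolding j'_def m N_def by (simp add: algebra_simps)
  define b' where "b' = (- j') mod N"
  define q2 where "q2 = (- j') div N"
  have j': "- j' = b' + N * q2" unfolding b'_def q2_def by simp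
  have G2: "G a' n j' = e n (nat a') (nat b') * upow u (N * (- q2))"
  proof -
    have "0 \<le> a'" "0 \<le> b'" unfolding a'_def b'_def using Np by auto
    then have "e n (nat a') (nat b') * upow u (N * (- q2)) = G a' n (- b' + N * (- q2))"
      unfolding e_def G_upow by simp
    also have "- b' + N * (- q2) = j'" using j' by simp
    finally show ?thesis by simp
  qed
  have ab: "0 \<le> a'" "a' < N" "0 \<le> b'" "b' < N" unfolding a'_def b'_def using Np by auto
  show ?thesis
  proof (intro exI conjI)
    show "nat a' < 2 ^ n" using ab unfolding N_def by (simp add: nat_less_iff)
    show "nat b' < 2 ^ n" using ab unfolding N_def by (simp add: nat_less_iff)
    show "G m n j = e n (nat a') (nat b') * upow u (2 ^ n * (- q2))" using G1 G2 unfolding N_def by simp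
    show "int (nat a') - int (nat b') + 2 ^ n * (- q2) = m + j"
      using ab m j' unfolding j'_def N_def by simp
  qed
qed

lemma nat_lt_from_int: "4 * int a < (2::int) ^ n \<Longrightarrow> 4 * a < 2 ^ n"
proof -
  assume h: "4 * int a < (2::int) ^ n"
  have "int (4 * a) < int (2 ^ n)" using h by (simp only: of_nat_mult of_nat_power of_nat_numeral)
  then show ?thesis by (simp only: of_nat_less_iff)
qed

lemma nat_le_from_int: "3 * (2::int) ^ n \<le> 4 * int a \<Longrightarrow> 3 * 2 ^ n \<le> 4 * a"
proof -
  assume h: "3 * (2::int) ^ n \<le> 4 * int a"
  have "int (3 * 2 ^ n) \<le> int (4 * a)" using h by (simp only: of_nat_mult of_nat_power of_nat_numeral)
  then show ?thesis by (simp only: of_nat_le_iff)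
qed

lemma lt_iff_int: "(4 * a < 2 ^ n) = (4 * int a < (2::int) ^ n)"
proof -
  have "(4 * a < 2 ^ n) = (int (4 * a) < int (2 ^ n))" by (simp only: of_nat_less_iff)
  then show ?thesis by (simp only: of_nat_mult of_nat_power of_nat_numeral)
qed

lemma le_iff_int: "(3 * 2 ^ n \<le> 4 * a) = (3 * (2::int) ^ n \<le> 4 * int a)"
proof -
  have "(3 * 2 ^ n \<le> 4 * a) = (int (3 * 2 ^ n) \<le> int (4 * a))" by (simp only: of_nat_le_iff)
  then show ?thesis by (simp only: of_nat_mult of_nat_power of_nat_numeral)
qed

lemma PB_e: "a < 2 ^ n \<Longrightarrow> b < 2 ^ n \<Longrightarrow> PB n * e n a b * QB n =
    (if 4 * a < 2 ^ n \<and> 3 * 2 ^ n \<le> 4 * b then e n a b else 0)"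
  unfolding PB_def QB_def by (simp add: proj_e_left proj_e_right)

lemma QB_e: "a < 2 ^ n \<Longrightarrow> b < 2 ^ n \<Longrightarrow> QB n * e n a b * PB n =
    (if 3 * 2 ^ n \<le> 4 * a \<and> 4 * b < 2 ^ n then e n a b else 0)"
  unfolding PB_def QB_def by (simp add: proj_e_left proj_e_right)

lemma gen_in_V:
  assumes small: "4 * \<bar>m + j\<bar> < (2::int) ^ n"
  shows "G m n j \<in> V n"
proof -
  obtain a b t where ab: "a < 2 ^ n" "b < 2 ^ n" and G: "G m n j = e n a b * upow u (2 ^ n * t)"
    and eq: "int a - int b + 2 ^ n * t = m + j"
    using G_decomp by blast
  define N :: int where "N = 2 ^ n"
  have Np: "N > 0" unfolding N_def by simp
  have abi: "int a < N" "int b < N" using ab unfolding N_def by (simp_all add: of_nat_less_iff[symmetric])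
  have eq': "int a - int b + N * t = m + j" using eq unfolding N_def .
  have sm: "4 * \<bar>m + j\<bar> < N" using small unfolding N_def .
  have ab1: "m + j \<le> \<bar>m + j\<bar>" "- (m + j) \<le> \<bar>m + j\<bar>" "0 \<le> \<bar>m + j\<bar>" by auto
  have ab0: "0 \<le> int a" "0 \<le> int b" by auto
  have Nt: "N * t = m + j - int a + int b" using eq' by linarith
  have "N * t < N * 2" using Nt sm abi ab1 ab0 by (smt (verit))
  then have t1: "t < 2" using Np by (metis mult_less_cancel_left_pos)
  have "N * (- 2) < N * t" using Nt sm abi ab1 ab0 by (smt (verit))
  then have t2: "- 2 < t" using Np by (metis mult_less_cancel_left_pos)
  have eA: "e n a b \<in> A n" using e_in_A ab by simp
  have z: "0 \<in> A n" by (rule subspD(1)[OF subsp_A])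
  have comm: "e n a b * upow u (2 ^ n * t) = upow u (2 ^ n * t) * e n a b"
    using A_comm[OF eA] by simp
  consider "t = 0" | "t = 1" | "t = -1" using t1 t2 by linarith
  then show ?thesis
  proof cases
    case 1
    then have "int a - int b = m + j" using eq' by simp
    then have "\<not> (4 * int a < N \<and> 3 * N \<le> 4 * int b)" "\<not> (3 * N \<le> 4 * int a \<and> 4 * int b < N)"
      using sm ab1 ab0 abi by (smt (verit))+
    then have "\<not> (4 * a < 2 ^ n \<and> 3 * 2 ^ n \<le> 4 * b)" "\<not> (3 * 2 ^ n \<le> 4 * a \<and> 4 * b < 2 ^ n)"
      unfolding N_def lt_iff_int le_iff_int by blast+
    note cc = this
    show ?thesis unfolding V_def G 1
      by (rule CollectI, rule exI[of _ "e n a b"], rule exI[of _ 0], rule exI[of _ 0], intro conjI) (use cc ab eA z in \<open>auto simp: PB_e QB_e\<close>)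
  next
    case 2
    then have "int b - int a = N - (m + j)" using eq' by simp
    then have h: "4 * int a < N" "3 * N \<le> 4 * int b"
      using sm abi ab1 ab0 by (smt (verit))+
    then have "4 * a < 2 ^ n" "3 * 2 ^ n \<le> 4 * b" "\<not> 3 * 2 ^ n \<le> 4 * a"
      using nat_lt_from_int[of a n] nat_le_from_int[of n b] unfolding N_def by auto
    note cc = this
    show ?thesis unfolding V_def G 2
      by (rule CollectI, rule exI[of _ 0], rule exI[of _ "e n a b"], rule exI[of _ 0], intro conjI) (use cc ab eA z comm 2 in \<open>auto simp: PB_e QB_e\<close>)
  next
    case 3
    then have "int a - int b = N + (m + j)" using eq' by simp
    then have h: "3 * N \<le> 4 * int a" "4 * int b < N"
      using sm abi ab1 ab0 by (smt (verit))+
    then have "3 * 2 ^ n \<le> 4 * a" "4 * b < 2 ^ n" "\<not> 4 * a < 2 ^ n"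
      using nat_lt_from_int[of b n] nat_le_from_int[of n a] unfolding N_def by auto
    note cc = this
    show ?thesis unfolding V_def G 3
      by (rule CollectI, rule exI[of _ 0], rule exI[of _ 0], rule exI[of _ "e n a b"], intro conjI) (use cc ab eA z comm 3 in \<open>auto simp: PB_e QB_e\<close>)
  qed
qed

lemma V_refine: "k \<le> n \<Longrightarrow> 4 * \<bar>m + j\<bar> < (2::int) ^ n \<Longrightarrow> G m k j \<in> V n"
proof (induction "n - k" arbitrary: k m j)
  case 0 then show ?case using gen_in_V by simp
next
  case (Suc d)
  then have kn: "Suc k \<le> n" "d = n - Suc k" by auto
  show ?case unfolding G_step[of m k j]
    by (rule subspD(2)[OF subsp_V]) (use Suc.hyps(1)[OF kn(2) kn(1)] Suc.prems in auto)
qed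

lemma B2g_V_eventually: "x \<in> B2g \<Longrightarrow> eventually (\<lambda>n. x \<in> V n) sequentially"
proof -
  assume "x \<in> B2g"
  then obtain m k j where x: "x = G m k j" unfolding B2g_def by blast
  show ?thesis unfolding eventually_sequentially
  proof (intro exI[of _ "max k (nat (4 * \<bar>m + j\<bar>))"] allI impI)
    fix n assume n: "max k (nat (4 * \<bar>m + j\<bar>)) \<le> n"
    have "int n < int (2 ^ n)" using less_exp[of n] by (simp only: of_nat_less_iff)
    then have "int n < 2 ^ n" by simp
    moreover have "4 * \<bar>m + j\<bar> \<le> int n" using n by linarith
    ultimately have h: "4 * \<bar>m + j\<bar> < 2 ^ n" by linarith
    show "x \<in> V n" unfolding x by (rule V_refine) (use n h in auto)
  qed
qed

lemma cspan_B2g_V: "x \<in> cspan B2g \<Longrightarrow> eventually (\<lambda>n. x \<in> V n) sequentially"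
  by (rule cspan_eventually[OF subsp_V B2g_V_eventually])

lemma V_decomp:
  assumes "y \<in> V n"
  shows "\<exists>y0 M1 M2. y0 \<in> A n \<and> M1 \<in> A n \<and> M2 \<in> A n \<and>
      y = y0 + upow u (2 ^ n) * M1 + upow u (- (2 ^ n)) * M2 \<and>
      PB n * y * QB n = upow u (2 ^ n) * M1 \<and> QB n * y * PB n = upow u (- (2 ^ n)) * M2"
proof -
  obtain y0 M1 M2 where x: "y0 \<in> A n" "M1 \<in> A n" "M2 \<in> A n" "y = y0 + upow u (2 ^ n) * M1 + upow u (- (2 ^ n)) * M2"
      "PB n * y0 * QB n = 0" "QB n * y0 * PB n = 0" "PB n * M1 * QB n = M1" "QB n * M1 * PB n = 0"
      "PB n * M2 * QB n = 0" "QB n * M2 * PB n = M2"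
    using assms unfolding V_def by blast
  have cP: "PB n * upow u (2 ^ n * t) = upow u (2 ^ n * t) * PB n" for t
    unfolding PB_def using A_comm[OF proj_in_A] by simp
  have cP1: "PB n * upow u (2 ^ n) = upow u (2 ^ n) * PB n" using cP[of 1] by simp
  have cP2: "PB n * upow u (- (2 ^ n)) = upow u (- (2 ^ n)) * PB n" using cP[of "-1"] by simp
  have cQ: "QB n * upow u (2 ^ n * t) = upow u (2 ^ n * t) * QB n" for t
    unfolding QB_def using A_comm[OF proj_in_A] by simp
  have cQ1: "QB n * upow u (2 ^ n) = upow u (2 ^ n) * QB n" using cQ[of 1] by simp
  have cQ2: "QB n * upow u (- (2 ^ n)) = upow u (- (2 ^ n)) * QB n" using cQ[of "-1"] by simp
  have cs: "p * x = x * p \<Longrightarrow> p * (x * m) * q = x * (p * m * q)" for p x m q :: 'a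
    by (metis mult.assoc)
  have "PB n * y * QB n = PB n * y0 * QB n + PB n * (upow u (2 ^ n) * M1) * QB n + PB n * (upow u (- (2 ^ n)) * M2) * QB n"
    unfolding x(4) by (simp only: distrib_left distrib_right)
  also have "\<dots> = PB n * y0 * QB n + upow u (2 ^ n) * (PB n * M1 * QB n) + upow u (- (2 ^ n)) * (PB n * M2 * QB n)"
    by (simp only: cs[OF cP1] cs[OF cP2])
  finally have 1: "PB n * y * QB n = PB n * y0 * QB n + upow u (2 ^ n) * (PB n * M1 * QB n) + upow u (- (2 ^ n)) * (PB n * M2 * QB n)" .
  have "QB n * y * PB n = QB n * y0 * PB n + QB n * (upow u (2 ^ n) * M1) * PB n + QB n * (upow u (- (2 ^ n)) * M2) * PB n"
    unfolding x(4) by (simp only: distrib_left distrib_right)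
  also have "\<dots> = QB n * y0 * PB n + upow u (2 ^ n) * (QB n * M1 * PB n) + upow u (- (2 ^ n)) * (QB n * M2 * PB n)"
    by (simp only: cs[OF cQ1] cs[OF cQ2])
  finally have 2: "QB n * y * PB n = QB n * y0 * PB n + upow u (2 ^ n) * (QB n * M1 * PB n) + upow u (- (2 ^ n)) * (QB n * M2 * PB n)" .
  have 3: "PB n * y * QB n = upow u (2 ^ n) * M1" using 1 x by simp
  have 4: "QB n * y * PB n = upow u (- (2 ^ n)) * M2" using 2 x by simp
  show ?thesis using x(1-4) 3 4 by blast
qed

end


context q2 begin

lemma A_sub_F2: "A n \<subseteq> F2 u s"
  unfolding F2_eq clspan_def using A_sub_F2g closure_subset by blast

lemma u_last_decomp: "\<exists>R\<in>A n. u = R + upow u (2 ^ n) * P n * e n 0 (2 ^ n - 1)"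
proof -
  define N :: nat where "N = 2 ^ n"
  have N: "N = Suc (N - 1)" unfolding N_def by simp
  have "u = u * (\<Sum>a<N. e n a a)" unfolding N_def by (simp add: sum_diag_e)
  also have "\<dots> = (\<Sum>a<N. u * e n a a)" by (rule sum_distrib_left)
  also have "\<dots> = (\<Sum>a<N - 1. u * e n a a) + u * e n (N - 1) (N - 1)"
    by (subst N) (simp only: sum.lessThan_Suc)
  finally have u: "u = (\<Sum>a<N - 1. u * e n a a) + u * e n (N - 1) (N - 1)" .
  have R: "(\<Sum>a<N - 1. u * e n a a) \<in> A n"
  proof (rule subsp_sum[OF subsp_A])
    fix a assume "a \<in> {..<N - 1}"
    then have a: "a + 1 < 2 ^ n" "a < 2 ^ n" unfolding N_def by auto
    have "u * e n a a = e n (a + 1) a" unfolding e_def using upow_G[of 1 "int a" n "- int a"]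
      by (simp add: add.commute)
    then show "u * e n a a \<in> A n" using e_in_A[OF a] by simp
  qed
  have "e n (N - 1) 0 * e n 0 (N - 1) = e n (N - 1) (N - 1)"
    unfolding N_def by (subst e_mult) auto
  then have "u * e n (N - 1) (N - 1) = u * e n (N - 1) 0 * e n 0 (N - 1)" by (simp add: mult.assoc)
  also have "\<dots> = upow u (2 ^ n) * P n * e n 0 (N - 1)" unfolding N_def by (simp only: u_e_last)
  finally show ?thesis using u R unfolding N_def by auto
qed

lemma maximal_aux:
  assumes C: "cstar_subalgebra C" "F2 u s \<subseteq> C" "C \<subseteq> B2 u s" "u \<notin> C"
  shows "C \<subseteq> F2 u s"
proof -
  have addC: "x \<in> C \<Longrightarrow> y \<in> C \<Longrightarrow> x + y \<in> C" and mulC: "x \<in> C \<Longrightarrow> y \<in> C \<Longrightarrow> x * y \<in> C"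
    and sC: "x \<in> C \<Longrightarrow> scaleC c x \<in> C" and adC: "x \<in> C \<Longrightarrow> cadj x \<in> C" and clC: "closed C" for x y c
    using C(1) unfolding cstar_subalgebra_def by auto
  have AC: "A n \<subseteq> C" for n using A_sub_F2 C(2) by blast
  obtain \<delta> where \<delta>: "\<delta> > 0" "\<And>z. z \<in> C \<Longrightarrow> \<delta> \<le> norm (u - z)"
  proof -
    have "open (- C)" using clC by (simp add: open_Compl)
    then obtain d where d: "d > 0" "ball u d \<subseteq> - C" using C(4) open_contains_ball by blast
    have "d \<le> norm (u - z)" if "z \<in> C" for z
      using d that by (force simp: dist_norm subset_iff)
    then show ?thesis using that d(1) by blast
  qed
  have D: "\<delta> \<le> norm (upow u (2 ^ n) * P n - z)" if z: "z \<in> C" for n z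
  proof -
    obtain R where R: "R \<in> A n" "u = R + upow u (2 ^ n) * P n * e n 0 (2 ^ n - 1)"
      using u_last_decomp by blast
    have eC: "e n 0 (2 ^ n - 1) \<in> C" using AC e_in_A[of 0 n "2 ^ n - 1"] by auto
    have "R + z * e n 0 (2 ^ n - 1) \<in> C" using AC R(1) z eC by (blast intro: addC mulC)
    then have "\<delta> \<le> norm (u - (R + z * e n 0 (2 ^ n - 1)))" by (rule \<delta>(2))
    also have "u - (R + z * e n 0 (2 ^ n - 1)) = (upow u (2 ^ n) * P n - z) * e n 0 (2 ^ n - 1)"
      by (subst R(2)) (simp add: algebra_simps)
    also have "norm \<dots> \<le> norm (upow u (2 ^ n) * P n - z) * norm (e n 0 (2 ^ n - 1))"
      by (rule norm_mult_ineq)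
    also have "\<dots> \<le> norm (upow u (2 ^ n) * P n - z)"
      using norm_e by (simp add: mult_left_le)
    finally show ?thesis .
  qed
  have Key: "norm M \<le> \<epsilon> / \<delta>" if z: "z \<in> C" and M: "M \<in> A n" and le: "norm (z - upow u (2 ^ n) * M) \<le> \<epsilon>" for z M n \<epsilon>
  proof (rule rows_lemma[OF M], unfold bnd_def, intro allI impI)
    fix r t assume r: "r \<in> A n" "P n * r = r" "norm r \<le> 1" and t: "t \<in> A n" "t * P n = t" "norm t \<le> 1"
    have e0: "0 \<le> \<epsilon>" using le norm_ge_zero order_trans by blast
    have rMt: "r * M * t \<in> A n" using A_mult[OF A_mult[OF r(1) M] t(1)] .
    obtain c where c: "r * M * t = scaleC c (P n)"
      using corner_scalar'[OF rMt] r(2) t(2) by (metis mult.assoc)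
    have rzt: "r * z * t \<in> C" using AC r(1) t(1) z by (blast intro: mulC)
    have cr: "r * upow u (2 ^ n) = upow u (2 ^ n) * r" using A_comm[OF r(1), of 1] by simp
    have "r * (upow u (2 ^ n) * M) * t = upow u (2 ^ n) * (r * M * t)"
      by (metis cr mult.assoc)
    also have "\<dots> = scaleC c (upow u (2 ^ n) * P n)" unfolding c by (simp add: scaleC_mult_right')
    finally have rr: "r * (upow u (2 ^ n) * M) * t = scaleC c (upow u (2 ^ n) * P n)" .
    have "r * (z - upow u (2 ^ n) * M) * t = r * z * t - r * (upow u (2 ^ n) * M) * t"
      by (simp only: right_diff_distrib left_diff_distrib)
    then have "r * (z - upow u (2 ^ n) * M) * t = r * z * t - scaleC c (upow u (2 ^ n) * P n)"
      by (simp only: rr)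
    moreover have "norm (r * (z - upow u (2 ^ n) * M) * t) \<le> \<epsilon>"
      using norm_sandwich[OF r(3) t(3)] le order_trans by blast
    ultimately have cl: "norm (r * z * t - scaleC c (upow u (2 ^ n) * P n)) \<le> \<epsilon>" by simp
    have "cmod c \<le> \<epsilon> / \<delta>"
    proof (cases "c = 0")
      case True then show ?thesis using e0 \<delta>(1) by simp
    next
      case False
      have z': "scaleC (1 / c) (r * z * t) \<in> C" using sC rzt by blast
      have "upow u (2 ^ n) * P n - scaleC (1 / c) (r * z * t) = scaleC (1 / c) (scaleC c (upow u (2 ^ n) * P n) - r * z * t)"
        using False by (simp add: scaleC_diff_right scaleC_scaleC)
      then have "norm (upow u (2 ^ n) * P n - scaleC (1 / c) (r * z * t)) = norm (r * z * t - scaleC c (upow u (2 ^ n) * P n)) / cmod c"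
        by (simp add: norm_scaleC norm_divide norm_minus_commute)
      also have "\<dots> \<le> \<epsilon> / cmod c" using cl False by (simp add: divide_right_mono)
      finally have "\<delta> \<le> \<epsilon> / cmod c" using D[OF z', of n] by linarith
      then show ?thesis using False \<delta>(1) by (simp add: field_simps)
    qed
    moreover have "norm (r * M * t) \<le> cmod c" unfolding c norm_scaleC
      using norm_P[of n] by (simp add: mult_left_le)
    ultimately show "norm (r * M * t) \<le> \<epsilon> / \<delta>" by linarith
  qed
  show ?thesis
  proof
    fix x assume x: "x \<in> C"
    have "x \<in> closure (cspan F2g)" unfolding closure_approachable
    proof (intro allI impI)
      fix e :: real assume e: "e > 0"
      define \<epsilon> where "\<epsilon> = e / (2 + 2 / \<delta>)"
      have dpos: "2 + 2 / \<delta> > 0" using \<delta>(1) by (simp add: add_pos_pos)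
      then have ep: "\<epsilon> > 0" unfolding \<epsilon>_def using e by simp
      have ee: "\<epsilon> + \<epsilon> / \<delta> + \<epsilon> / \<delta> < e"
      proof -
        have "\<epsilon> + \<epsilon> / \<delta> + \<epsilon> / \<delta> = \<epsilon> * (1 + 2 / \<delta>)" by (simp add: field_simps)
        also have "\<dots> < \<epsilon> * (2 + 2 / \<delta>)" using ep by simp
        also have "\<dots> = e" unfolding \<epsilon>_def using dpos by simp
        finally show ?thesis .
      qed
      obtain y where y: "y \<in> cspan B2g" "norm (x - y) < \<epsilon>"
        using clspan_approx[of x B2g \<epsilon>] C(3) x ep unfolding B2_eq by blast
      obtain n where yV: "y \<in> V n" using cspan_B2g_V[OF y(1)] eventually_sequentially by auto
      obtain y0 M1 M2 where dec: "y0 \<in> A n" "M1 \<in> A n" "M2 \<in> A n"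
        "y = y0 + upow u (2 ^ n) * M1 + upow u (- (2 ^ n)) * M2"
        "PB n * y * QB n = upow u (2 ^ n) * M1" "QB n * y * PB n = upow u (- (2 ^ n)) * M2"
        using V_decomp[OF yV] by blast
      have PBC: "PB n \<in> C" "QB n \<in> C" unfolding PB_def QB_def using AC proj_in_A by auto
      have nPB: "norm (PB n) \<le> 1" "norm (QB n) \<le> 1" unfolding PB_def QB_def by (simp_all add: norm_proj)
      have M1: "norm M1 \<le> \<epsilon> / \<delta>"
      proof (rule Key[of "PB n * x * QB n"])
        show "PB n * x * QB n \<in> C" using PBC x by (blast intro: mulC)
        show "M1 \<in> A n" by fact
        have "PB n * x * QB n - upow u (2 ^ n) * M1 = PB n * (x - y) * QB n"
          using dec(5) by (simp add: algebra_simps)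
        also have "norm \<dots> \<le> norm (x - y)" using norm_sandwich[OF nPB] by blast
        finally show "norm (PB n * x * QB n - upow u (2 ^ n) * M1) \<le> \<epsilon>" using y(2) by simp
      qed
      have M2: "norm (cadj M2) \<le> \<epsilon> / \<delta>"
      proof (rule Key[of "PB n * cadj x * QB n"])
        show "PB n * cadj x * QB n \<in> C" using PBC x adC by (blast intro: mulC)
        show "cadj M2 \<in> A n" using A_cadj dec(3) by blast
        have cM: "cadj M2 * upow u (2 ^ n) = upow u (2 ^ n) * cadj M2"
          using A_comm[OF A_cadj[OF dec(3)], of 1] by simp
        have "cadj (QB n * x * PB n - upow u (- (2 ^ n)) * M2) = PB n * cadj x * QB n - upow u (2 ^ n) * cadj M2"
          unfolding PB_def QB_def
          by (simp add: cadj_diff cadj_mult cadj_upow cadj_proj mult.assoc cM)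
        then have "norm (PB n * cadj x * QB n - upow u (2 ^ n) * cadj M2) = norm (QB n * x * PB n - upow u (- (2 ^ n)) * M2)"
          by (metis norm_cadj)
        also have "QB n * x * PB n - upow u (- (2 ^ n)) * M2 = QB n * (x - y) * PB n"
          using dec(6) by (simp add: algebra_simps)
        also have "norm \<dots> \<le> norm (x - y)" using norm_sandwich nPB by blast
        finally show "norm (PB n * cadj x * QB n - upow u (2 ^ n) * cadj M2) \<le> \<epsilon>" using y(2) by simp
      qed
      have xe: "x - y0 = (x - y) + upow u (2 ^ n) * M1 + upow u (- (2 ^ n)) * M2"
        using dec(4) by (simp add: algebra_simps)
      have t1: "norm (x - y0) \<le> norm ((x - y) + upow u (2 ^ n) * M1) + norm (upow u (- (2 ^ n)) * M2)"
        unfolding xe by (rule norm_triangle_ineq)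
      have t2: "norm ((x - y) + upow u (2 ^ n) * M1) \<le> norm (x - y) + norm (upow u (2 ^ n) * M1)"
        by (rule norm_triangle_ineq)
      have t3: "norm (upow u (2 ^ n) * M1) \<le> norm M1"
        using norm_mult_ineq[of "upow u (2 ^ n)" M1] norm_upow[of "2 ^ n"]
        by (meson mult_left_le_one_le norm_ge_zero order_trans)
      have t4: "norm (upow u (- (2 ^ n)) * M2) \<le> norm M2"
        using norm_mult_ineq[of "upow u (- (2 ^ n))" M2] norm_upow[of "- (2 ^ n)"]
        by (meson mult_left_le_one_le norm_ge_zero order_trans)
      have "norm (x - y0) < e" using t1 t2 t3 t4 y(2) M1 M2 ee by simp
      moreover have "y0 \<in> cspan F2g" using dec(1) A_sub_F2g by blast
      ultimately show "\<exists>y\<in>cspan F2g. dist y x < e" by (auto simp: dist_norm norm_minus_commute)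
    qed
    then show "x \<in> F2 u s" unfolding F2_eq clspan_def .
  qed
qed

lemma upow_in: "cstar_subalgebra C \<Longrightarrow> 1 \<in> C \<Longrightarrow> u \<in> C \<Longrightarrow> upow u m \<in> C"
proof -
  assume C: "cstar_subalgebra C" "1 \<in> C" "u \<in> C"
  have pw: "x \<in> C \<Longrightarrow> x ^ k \<in> C" for x k
    using C unfolding cstar_subalgebra_def by (induction k) auto
  have "cadj u \<in> C" using C unfolding cstar_subalgebra_def by auto
  then show ?thesis unfolding upow_def using pw C(3) by auto
qed

lemma B2_sub: assumes C: "cstar_subalgebra C" "F2 u s \<subseteq> C" "u \<in> C" shows "B2 u s \<subseteq> C"
  unfolding B2_eq
proof (rule clspan_least[OF C(1)])
  have one: "1 \<in> C" using C(2) A_sub_F2[of 0] one_in_A[of 0] by blast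
  show "B2g \<subseteq> C"
  proof
    fix x assume "x \<in> B2g"
    then obtain m n k where x: "x = G m n k" unfolding B2g_def by blast
    have "P n \<in> C" using C(2) A_sub_F2 P_in_A by blast
    then show "x \<in> C" unfolding x G_def using upow_in[OF C(1) one C(3)] C(1)
      unfolding cstar_subalgebra_def by blast
  qed
qed

end

theorem theorem3p3:
  fixes u s :: "'a::cstar_algebra"
  assumes "Q2_relations u s"
  shows "cstar_subalgebra (F2 u s) \<and> cstar_subalgebra (B2 u s) \<and> F2 u s \<subset> B2 u s \<and>
         (\<forall>C. cstar_subalgebra C \<and> F2 u s \<subseteq> C \<and> C \<subseteq> B2 u s \<longrightarrow>
               C = F2 u s \<or> C = B2 u s)"
proof -
  interpret q2 u s by unfold_locales (rule assms)
  have "F2 u s \<subset> B2 u s" using F2_sub_B2 u_in_B2 u_notin_F2 by blast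
  moreover have "\<forall>C. cstar_subalgebra C \<and> F2 u s \<subseteq> C \<and> C \<subseteq> B2 u s \<longrightarrow> C = F2 u s \<or> C = B2 u s"
  proof (intro allI impI)
    fix C assume C: "cstar_subalgebra C \<and> F2 u s \<subseteq> C \<and> C \<subseteq> B2 u s"
    show "C = F2 u s \<or> C = B2 u s"
    proof (cases "u \<in> C")
      case True
      then show ?thesis using B2_sub[of C] C by blast
    next
      case False
      then show ?thesis using maximal_aux[of C] C by blast
    qed
  qed
  ultimately show ?thesis using cstar_F2 cstar_B2 by blast
qed


end
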